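(* Consider the base and perturbed optimal Bayesian inference models described in the context, and let $(s_n)$ be a sequence with $s_n\to 0_+$. There exists a constant $C$, which may depend on all parameters of the problem (such as $K$ and $S$) but not on $n$, such that for every $\lambda_n\in\mathcal{D}_{n,K}$, $$\big|\mathbb{E}\,F_{0,n}-\mathbb{E}\,F_n(\lambda_n)\big|\le C s_n .$$ Consequently $\mathbb{E}\,F_{0,n}$ and $\mathbb{E}\,F_n(\lambda_n)$ have the same limit as $n\to+\infty$, provided this limit exists.
   Context: All quantities are real. Fix an integer $K\ge1$ (independent of $n$) and $S>0$. A signal $X=(X_{ik})\in[-S,S]^{n\times K}$ is drawn from a prior $P_0(\cdot\mid\theta_0)$, where the hyper-parameter $\theta_0\in\Theta_0$ is itself random with distribution $P_{\theta_0}$. Data $\widetilde Y$ in a generic set $\widetilde{\mathcal Y}$ are drawn as $\widetilde Y\sim P_{\rm out}(\cdot\mid X,\theta_{\rm out})$, where $\theta_{\rm out}\in\Theta_{\rm out}$ is random with distribution $P_{\theta_{\rm out}}$; write $\theta=(\theta_0,\theta_{\rm out})$. The statistician knows $P_0$, $P_{\rm out}$ and $\theta$ (optimal Bayesian inference). The averaged free energy of the base model is $\mathbb{E}F_{0,n}=-\frac1n\mathbb{E}\ln\int dP_0(x\mid\theta_0)P_{\rm out}(\widetilde Y\mid x,\theta_{\rm out})$, with $\mathbb{E}$ over $(\theta,X,\widetilde Y)$. Let $\mathcal{D}_K$ be the set of symmetric $K\times K$ real matrices $\tilde\lambda$ with $\tilde\lambda_{kk'}=\tilde\lambda_{k'k}\in(1,2)$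 for $k\neq k'$ and $\tilde\lambda_{kk}\in(2K,2K+1)$ for all $k$, and $\mathcal D_{n,K}=s_n\mathcal D_K$ (these are symmetric positive definite). For $\lambda_n\in\mathcal D_{n,K}$ with unique positive definite square root $\lambda_n^{1/2}$, the perturbed model additionally observes $Y=X\lambda_n^{1/2}+Z\in\mathbb{R}^{n\times K}$, where the rows of $Z$ are i.i.d. $\mathcal N(0,I_K)$, independent of everything else. Define $\mathcal H_{\lambda_n}(x,Y)=\frac12\|x\lambda_n^{1/2}\|_F^2-\mathrm{Tr}(Y^\intercal x\lambda_n^{1/2})$ and the perturbed free energy $F_n(\lambda_n)=-\frac1n\ln\int dP_0(x\mid\theta_0)P_{\rm out}(\widetilde Y\mid x,\theta_{\rm out})e^{-\mathcal H_{\lambda_n}(x,Y)}$. In $\mathbb{E}F_n(\lambda_n)$ the expectation is over $(\theta,X,\widetilde Y,Y)$ with $\lambda_n$ fixed. *)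

theory Defs
  imports "HOL-Probability.Probability"
begin

text \<open>Matrices are represented as functions on index pairs (row, column); an n x K matrix
  is an element of the product space over {..<n} x {..<K} (extensional, undefined outside).
  K x K parameter matrices are functions nat x nat to real that vanish outside {..<K}^2.\<close>

definition idx :: "nat \<Rightarrow> nat \<Rightarrow> (nat \<times> nat) set" where
  "idx n K = {..<n} \<times> {..<K}"

definition Mat :: "nat \<Rightarrow> nat \<Rightarrow> (nat \<times> nat \<Rightarrow> real) measure" where
  "Mat n K = PiM (idx n K) (\<lambda>_. borel)"

definition std_normal :: "real measure" where
  "std_normal = density lborel std_normal_density"

definition Gauss :: "nat \<Rightarrow> nat \<Rightarrow> (nat \<times> nat \<Rightarrow> real) measure" where
  "Gauss n K = PiM (idx n K) (\<lambda>_. std_normal)"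

definition mmul :: "nat \<Rightarrow> (nat \<times> nat \<Rightarrow> real) \<Rightarrow> (nat \<times> nat \<Rightarrow> real) \<Rightarrow> (nat \<times> nat \<Rightarrow> real)" where
  "mmul K x R = (\<lambda>(i,k). \<Sum>l<K. x (i,l) * R (l,k))"

definition sqmat :: "nat \<Rightarrow> (nat \<times> nat \<Rightarrow> real) \<Rightarrow> bool" where
  "sqmat K L \<longleftrightarrow> (\<forall>i j. \<not> (i < K \<and> j < K) \<longrightarrow> L (i,j) = 0)"

definition symmetric_mat :: "nat \<Rightarrow> (nat \<times> nat \<Rightarrow> real) \<Rightarrow> bool" where
  "symmetric_mat K L \<longleftrightarrow> (\<forall>i<K. \<forall>j<K. L (i,j) = L (j,i))"

definition posdef_mat :: "nat \<Rightarrow> (nat \<times> nat \<Rightarrow> real) \<Rightarrow> bool" where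
  "posdef_mat K L \<longleftrightarrow> symmetric_mat K L \<and>
     (\<forall>v::nat \<Rightarrow> real. (\<exists>i<K. v i \<noteq> 0) \<longrightarrow> (\<Sum>i<K. \<Sum>j<K. v i * L (i,j) * v j) > 0)"

definition sqrtm :: "nat \<Rightarrow> (nat \<times> nat \<Rightarrow> real) \<Rightarrow> (nat \<times> nat \<Rightarrow> real)" where
  "sqrtm K L = (THE R. sqmat K R \<and> posdef_mat K R \<and>
       (\<forall>i<K. \<forall>j<K. (\<Sum>l<K. R (i,l) * R (l,j)) = L (i,j)))"

definition DK :: "nat \<Rightarrow> (nat \<times> nat \<Rightarrow> real) set" where
  "DK K = {L. sqmat K L \<and> symmetric_mat K L \<and>
     (\<forall>i<K. \<forall>j<K. i \<noteq> j \<longrightarrow> 1 < L (i,j) \<and> L (i,j) < 2) \<and>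
     (\<forall>i<K. 2 * real K < L (i,i) \<and> L (i,i) < 2 * real K + 1)}"

definition DnK :: "real \<Rightarrow> nat \<Rightarrow> (nat \<times> nat \<Rightarrow> real) set" where
  "DnK sn K = (\<lambda>L. (\<lambda>ij. sn * L ij)) ` DK K"

definition Ham :: "nat \<Rightarrow> nat \<Rightarrow> (nat \<times> nat \<Rightarrow> real) \<Rightarrow> (nat \<times> nat \<Rightarrow> real) \<Rightarrow> (nat \<times> nat \<Rightarrow> real) \<Rightarrow> real" where
  "Ham n K L x Y = (let xR = mmul K x (sqrtm K L) in
     (1/2) * (\<Sum>ik\<in>idx n K. (xR ik)^2) - (\<Sum>ik\<in>idx n K. Y ik * xR ik))"

definition law ::
  "'a measure \<Rightarrow> 'b measure \<Rightarrow> ('a \<Rightarrow> (nat \<times> nat \<Rightarrow> real) measure) \<Rightarrow> 'c measure \<Rightarrow>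
   ((nat \<times> nat \<Rightarrow> real) \<Rightarrow> 'b \<Rightarrow> 'c \<Rightarrow> real) \<Rightarrow> nat \<Rightarrow> nat \<Rightarrow>
   ('a \<times> 'b \<times> (nat \<times> nat \<Rightarrow> real) \<times> 'c \<times> (nat \<times> nat \<Rightarrow> real)) measure" where
  "law Pt0 Pto P0 \<mu> pout n K =
     bind Pt0 (\<lambda>t0. bind Pto (\<lambda>to. bind (P0 t0) (\<lambda>X.
       bind (density \<mu> (\<lambda>y. ennreal (pout X to y))) (\<lambda>y.
         bind (Gauss n K) (\<lambda>Z.
           return (Pt0 \<Otimes>\<^sub>M Pto \<Otimes>\<^sub>M Mat n K \<Otimes>\<^sub>M \<mu> \<Otimes>\<^sub>M Mat n K) (t0, to, X, y, Z))))))"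

definition F0 ::
  "('a \<Rightarrow> (nat \<times> nat \<Rightarrow> real) measure) \<Rightarrow> ((nat \<times> nat \<Rightarrow> real) \<Rightarrow> 'b \<Rightarrow> 'c \<Rightarrow> real) \<Rightarrow> nat \<Rightarrow>
   'a \<times> 'b \<times> (nat \<times> nat \<Rightarrow> real) \<times> 'c \<times> (nat \<times> nat \<Rightarrow> real) \<Rightarrow> real" where
  "F0 P0 pout n = (\<lambda>(t0, to, X, y, Z).
     - (1 / real n) * ln (\<integral>x. pout x to y \<partial>(P0 t0)))"

definition Fpert ::
  "('a \<Rightarrow> (nat \<times> nat \<Rightarrow> real) measure) \<Rightarrow> ((nat \<times> nat \<Rightarrow> real) \<Rightarrow> 'b \<Rightarrow> 'c \<Rightarrow> real) \<Rightarrow> nat \<Rightarrow> nat \<Rightarrow>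
   (nat \<times> nat \<Rightarrow> real) \<Rightarrow>
   'a \<times> 'b \<times> (nat \<times> nat \<Rightarrow> real) \<times> 'c \<times> (nat \<times> nat \<Rightarrow> real) \<Rightarrow> real" where
  "Fpert P0 pout n K L = (\<lambda>(t0, to, X, y, Z).
     (let Y = (\<lambda>ik. mmul K X (sqrtm K L) ik + Z ik) in
     - (1 / real n) * ln (\<integral>x. pout x to y * exp (- Ham n K L x Y) \<partial>(P0 t0))))"

end

theory Submission
  imports Defs
begin

lemma integral_bind_gen:
  fixes f :: "_ \<Rightarrow> real"
  assumes N[measurable]: "N \<in> measurable M (subprob_algebra K)"
    and ne: "space M \<noteq> {}"
    and f: "integrable (bind M N) f"
  shows "integrable M (\<lambda>x. \<integral>y. f y \<partial>N x)"
    and "(\<integral>y. f y \<partial>bind M N) = (\<integral>x. \<integral>y. f y \<partial>N x \<partial>M)"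
proof -
  have sb: "sets (bind M N) = sets K"
    by (rule sets_bind[OF sets_kernel[OF N] ne])
  have fm[measurable]: "f \<in> borel_measurable K"
    using borel_measurable_integrable[OF f] sb measurable_cong_sets by blast
  define P where "P x = (\<integral>\<^sup>+y. ennreal (f y) \<partial>N x)" for x
  define Q where "Q x = (\<integral>\<^sup>+y. ennreal (- f y) \<partial>N x)" for x
  have Pm[measurable]: "P \<in> borel_measurable M" unfolding P_def
    by (rule measurable_compose[OF N nn_integral_measurable_subprob_algebra]) simp
  have Qm[measurable]: "Q \<in> borel_measurable M" unfolding Q_def
    by (rule measurable_compose[OF N nn_integral_measurable_subprob_algebra]) simp
  have bP: "(\<integral>\<^sup>+y. ennreal (f y) \<partial>bind M N) = (\<integral>\<^sup>+x. P x \<partial>M)"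
    unfolding P_def by (rule nn_integral_bind[OF _ N]) simp
  have bQ: "(\<integral>\<^sup>+y. ennreal (- f y) \<partial>bind M N) = (\<integral>\<^sup>+x. Q x \<partial>M)"
    unfolding Q_def by (rule nn_integral_bind[OF _ N]) simp
  have finP: "(\<integral>\<^sup>+y. ennreal (f y) \<partial>bind M N) < \<infinity>"
    using f unfolding real_integrable_def by (auto simp: less_top)
  have finQ: "(\<integral>\<^sup>+y. ennreal (- f y) \<partial>bind M N) < \<infinity>"
    using f unfolding real_integrable_def by (auto simp: less_top)
  have aeP: "AE x in M. P x \<noteq> \<infinity>"
    using finP bP by (intro nn_integral_PInf_AE) auto
  have aeQ: "AE x in M. Q x \<noteq> \<infinity>"
    using finQ bQ by (intro nn_integral_PInf_AE) auto
  have ae: "AE x in M. (\<integral>y. f y \<partial>N x) = enn2real (P x) - enn2real (Q x)"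
    using aeP aeQ AE_space
  proof eventually_elim
    case (elim x)
    have sx: "sets (N x) = sets K" using N elim(3) by (rule sets_kernel)
    have fx: "f \<in> borel_measurable (N x)" by (subst measurable_cong_sets[OF sx refl]) (rule fm)
    have "integrable (N x) f"
      unfolding real_integrable_def using fx elim(1,2) by (simp add: P_def Q_def less_top)
    then show ?case unfolding P_def Q_def by (rule real_lebesgue_integral_def)
  qed
  have iP: "integrable M (\<lambda>x. enn2real (P x))"
  proof (rule integrableI_nonneg)
    have "(\<integral>\<^sup>+x. ennreal (enn2real (P x)) \<partial>M) = (\<integral>\<^sup>+x. P x \<partial>M)"
      using aeP by (auto intro!: nn_integral_cong_AE elim!: eventually_mono simp: less_top)
    then show "(\<integral>\<^sup>+x. ennreal (enn2real (P x)) \<partial>M) < \<infinity>"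
      using finP bP by simp
  qed (simp_all add: borel_measurable_enn2real)
  have iQ: "integrable M (\<lambda>x. enn2real (Q x))"
  proof (rule integrableI_nonneg)
    have "(\<integral>\<^sup>+x. ennreal (enn2real (Q x)) \<partial>M) = (\<integral>\<^sup>+x. Q x \<partial>M)"
      using aeQ by (auto intro!: nn_integral_cong_AE elim!: eventually_mono simp: less_top)
    then show "(\<integral>\<^sup>+x. ennreal (enn2real (Q x)) \<partial>M) < \<infinity>"
      using finQ bQ by simp
  qed (simp_all add: borel_measurable_enn2real)
  have im: "(\<lambda>x. \<integral>y. f y \<partial>N x) \<in> borel_measurable M"
    by (rule measurable_compose[OF N integral_measurable_subprob_algebra]) simp
  show I: "integrable M (\<lambda>x. \<integral>y. f y \<partial>N x)"
    using integrable_cong_AE[OF im _ ae] iP iQ by auto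
  have eP: "(\<integral>x. enn2real (P x) \<partial>M) = enn2real (\<integral>\<^sup>+x. P x \<partial>M)"
    using aeP by (subst integral_eq_nn_integral) (auto intro!: arg_cong[where f=enn2real] nn_integral_cong_AE elim!: eventually_mono simp: less_top)
  have eQ: "(\<integral>x. enn2real (Q x) \<partial>M) = enn2real (\<integral>\<^sup>+x. Q x \<partial>M)"
    using aeQ by (subst integral_eq_nn_integral) (auto intro!: arg_cong[where f=enn2real] nn_integral_cong_AE elim!: eventually_mono simp: less_top)
  have "(\<integral>x. \<integral>y. f y \<partial>N x \<partial>M) = (\<integral>x. enn2real (P x) - enn2real (Q x) \<partial>M)"
    by (intro integral_cong_AE[OF im _ ae] borel_measurable_diff borel_measurable_enn2real Pm Qm)
  also have "\<dots> = enn2real (\<integral>\<^sup>+x. P x \<partial>M) - enn2real (\<integral>\<^sup>+x. Q x \<partial>M)"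
    using iP iQ eP eQ by simp
  also have "\<dots> = (\<integral>y. f y \<partial>bind M N)"
    using real_lebesgue_integral_def[OF f] bP bQ by simp
  finally show "(\<integral>y. f y \<partial>bind M N) = (\<integral>x. \<integral>y. f y \<partial>N x \<partial>M)" by simp
qed

lemma prob_space_std_normal: "prob_space std_normal"
  unfolding std_normal_def by (rule prob_space_normal_density) simp

lemma prob_space_Gauss: "prob_space (Gauss n K)"
  unfolding Gauss_def by (intro prob_space_PiM prob_space_std_normal)

lemma space_std_normal[simp]: "space std_normal = UNIV"
  unfolding std_normal_def by simp

lemma sets_std_normal[simp]: "sets std_normal = sets borel"
  unfolding std_normal_def by simp

lemma meas_std_normal: "(f \<in> measurable std_normal N) = (f \<in> measurable borel N)"
proof -
  have "measurable std_normal N = measurable borel N" by (rule measurable_cong_sets) simp_all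
  then show ?thesis by simp
qed

lemma mgf_std_normal:
  "(\<integral>\<^sup>+z. ennreal (exp (a * z)) \<partial>std_normal) = ennreal (exp (a^2/2))"
proof -
  have eq: "std_normal_density z * exp (a * z) = exp (a^2/2) * normal_density a 1 z" for z
  proof -
    have e: "- z\<^sup>2 / 2 + a * z = a^2/2 + (- (z - a)\<^sup>2 / 2)"
      by (simp add: power2_eq_square field_simps)
    have "exp (- z\<^sup>2 / 2) * exp (a * z) = exp (- z\<^sup>2 / 2 + a * z)"
      by (rule exp_add[symmetric])
    also have "\<dots> = exp (a^2/2 + (- (z - a)\<^sup>2 / 2))" by (simp only: e)
    also have "\<dots> = exp (a^2/2) * exp (- (z - a)\<^sup>2 / 2)" by (rule exp_add)
    finally have "exp (- z\<^sup>2 / 2) * exp (a * z) = exp (a^2/2) * exp (- (z - a)\<^sup>2 / 2)" .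
    then show ?thesis by (simp add: normal_density_def std_normal_density_def)
  qed
  have "(\<integral>\<^sup>+z. ennreal (exp (a * z)) \<partial>std_normal)
      = (\<integral>\<^sup>+z. ennreal (std_normal_density z) * ennreal (exp (a * z)) \<partial>lborel)"
    unfolding std_normal_def by (subst nn_integral_density) auto
  also have "\<dots> = (\<integral>\<^sup>+z. ennreal (exp (a^2/2)) * ennreal (normal_density a 1 z) \<partial>lborel)"
    by (intro nn_integral_cong) (simp only: ennreal_mult[symmetric] eq normal_density_nonneg exp_ge_zero)
  also have "\<dots> = ennreal (exp (a^2/2)) * (\<integral>\<^sup>+z. ennreal (normal_density a 1 z) \<partial>lborel)"
    by (rule nn_integral_cmult) simp
  also have "(\<integral>\<^sup>+z. ennreal (normal_density a 1 z) \<partial>lborel) = 1"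
  proof -
    interpret prob_space "density lborel (normal_density a 1)"
      by (rule prob_space_normal_density) simp
    show ?thesis using emeasure_space_1 by (simp add: emeasure_density)
  qed
  finally show ?thesis by simp
qed

lemma mgf_Gauss:
  "(\<integral>\<^sup>+Z. ennreal (exp (\<Sum>ik\<in>idx n K. a ik * Z ik)) \<partial>Gauss n K)
     = ennreal (exp (\<Sum>ik\<in>idx n K. (a ik)^2/2))"
proof -
  interpret product_prob_space "\<lambda>_. std_normal" "idx n K"
    by (simp add: product_prob_space_def product_prob_space_axioms_def prob_space_std_normal
        product_sigma_finite_def prob_space_imp_sigma_finite)
  have fin: "finite (idx n K)" unfolding idx_def by simp
  have "(\<integral>\<^sup>+Z. ennreal (exp (\<Sum>ik\<in>idx n K. a ik * Z ik)) \<partial>Gauss n K)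
      = (\<integral>\<^sup>+Z. (\<Prod>ik\<in>idx n K. ennreal (exp (a ik * Z ik))) \<partial>Gauss n K)"
    by (intro nn_integral_cong) (simp add: exp_sum[OF fin] prod_ennreal)
  also have "\<dots> = (\<Prod>ik\<in>idx n K. (\<integral>\<^sup>+z. ennreal (exp (a ik * z)) \<partial>std_normal))"
    unfolding Gauss_def by (rule product_nn_integral_prod[OF fin]) (simp add: meas_std_normal)
  also have "\<dots> = (\<Prod>ik\<in>idx n K. ennreal (exp ((a ik)^2/2)))"
    by (simp add: mgf_std_normal)
  also have "\<dots> = ennreal (exp (\<Sum>ik\<in>idx n K. (a ik)^2/2))"
    by (simp add: exp_sum[OF fin] prod_ennreal)
  finally show ?thesis .
qed

lemma Gauss_component:
  assumes "ik \<in> idx n K"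
  shows "distr (Gauss n K) std_normal (\<lambda>Z. Z ik) = std_normal"
  unfolding Gauss_def using assms by (intro distr_PiM_component prob_space_std_normal)

lemma std_normal_abs: "integrable std_normal (\<lambda>z. \<bar>z\<bar>)" "(\<integral>z. \<bar>z\<bar> \<partial>std_normal) \<le> 1"
proof -
  have i: "integrable lborel (\<lambda>x. std_normal_density x * \<bar>x\<bar>)"
    using integrable_std_normal_moment_abs[of 1] by simp
  show "integrable std_normal (\<lambda>z. \<bar>z\<bar>)"
    unfolding std_normal_def by (subst integrable_density) (simp_all add: i)
  have "(\<integral>z. \<bar>z\<bar> \<partial>std_normal) = (\<integral>x. std_normal_density x * \<bar>x\<bar> \<partial>lborel)"
    unfolding std_normal_def by (subst integral_density) auto
  also have "\<dots> = sqrt (2/pi)"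
    using integral_std_normal_moment_abs_odd[of 0] by simp
  also have "\<dots> \<le> 1"
    by (subst real_sqrt_le_1_iff) (use pi_gt3 in simp)
  finally show "(\<integral>z. \<bar>z\<bar> \<partial>std_normal) \<le> 1" .
qed

lemma std_normal_id: "integrable std_normal (\<lambda>z. z)" "(\<integral>z. z \<partial>std_normal) = 0"
proof -
  have i: "integrable lborel (\<lambda>x. std_normal_density x * x)"
    using integrable_std_normal_moment[of 1] by simp
  show "integrable std_normal (\<lambda>z. z)"
    unfolding std_normal_def by (subst integrable_density) (simp_all add: i)
  have "(\<integral>z. z \<partial>std_normal) = (\<integral>x. std_normal_density x * x \<partial>lborel)"
    unfolding std_normal_def by (subst integral_density) auto
  also have "\<dots> = 0"
    using integral_std_normal_moment_odd[of 0] by simp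
  finally show "(\<integral>z. z \<partial>std_normal) = 0" .
qed

lemma Gauss_coord:
  assumes "ik \<in> idx n K"
  shows "integrable (Gauss n K) (\<lambda>Z. Z ik)" "(\<integral>Z. Z ik \<partial>Gauss n K) = 0"
    "integrable (Gauss n K) (\<lambda>Z. \<bar>Z ik\<bar>)" "(\<integral>Z. \<bar>Z ik\<bar> \<partial>Gauss n K) \<le> 1"
proof -
  have m: "(\<lambda>Z. Z ik) \<in> measurable (Gauss n K) std_normal"
    unfolding Gauss_def using assms by (rule measurable_component_singleton)
  note D = Gauss_component[OF assms]
  have mz: "(\<lambda>z. z) \<in> borel_measurable std_normal" by (simp add: meas_std_normal)
  have ma: "(\<lambda>z. \<bar>z\<bar>) \<in> borel_measurable std_normal" by (simp add: meas_std_normal)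
  have "integrable (distr (Gauss n K) std_normal (\<lambda>Z. Z ik)) (\<lambda>z. z)"
    unfolding D by (rule std_normal_id(1))
  then show "integrable (Gauss n K) (\<lambda>Z. Z ik)"
    by (simp only: integrable_distr_eq[OF m mz])
  have "(\<integral>z. z \<partial>distr (Gauss n K) std_normal (\<lambda>Z. Z ik)) = 0"
    unfolding D by (rule std_normal_id(2))
  then show "(\<integral>Z. Z ik \<partial>Gauss n K) = 0"
    by (simp only: integral_distr[OF m mz])
  have "integrable (distr (Gauss n K) std_normal (\<lambda>Z. Z ik)) (\<lambda>z. \<bar>z\<bar>)"
    unfolding D by (rule std_normal_abs(1))
  then show "integrable (Gauss n K) (\<lambda>Z. \<bar>Z ik\<bar>)"
    by (simp only: integrable_distr_eq[OF m ma])
  have "(\<integral>z. \<bar>z\<bar> \<partial>distr (Gauss n K) std_normal (\<lambda>Z. Z ik)) \<le> 1"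
    unfolding D by (rule std_normal_abs(2))
  then show "(\<integral>Z. \<bar>Z ik\<bar> \<partial>Gauss n K) \<le> 1"
    by (simp only: integral_distr[OF m ma])
qed

definition rs :: "nat \<Rightarrow> (nat \<times> nat \<Rightarrow> real) \<Rightarrow> real \<Rightarrow> bool" where
  "rs K A a \<longleftrightarrow> (\<forall>i<K. (\<Sum>j<K. \<bar>A (i,j)\<bar>) \<le> a)"

lemma mmul_apply: "mmul K A B (i,j) = (\<Sum>l<K. A (i,l) * B (l,j))"
  by (simp add: mmul_def)

lemma rs_mul:
  assumes "rs K A a" "rs K B b" "0 \<le> b"
  shows "rs K (mmul K A B) (a*b)"
  unfolding rs_def
proof (intro allI impI)
  fix i assume i: "i < K"
  have "(\<Sum>j<K. \<bar>mmul K A B (i,j)\<bar>) \<le> (\<Sum>j<K. \<Sum>l<K. \<bar>A (i,l)\<bar> * \<bar>B (l,j)\<bar>)"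
    unfolding mmul_apply by (intro sum_mono order.trans[OF sum_abs]) (simp add: abs_mult)
  also have "\<dots> = (\<Sum>l<K. \<bar>A (i,l)\<bar> * (\<Sum>j<K. \<bar>B (l,j)\<bar>))"
    by (subst sum.swap) (simp add: sum_distrib_left)
  also have "\<dots> \<le> (\<Sum>l<K. \<bar>A (i,l)\<bar> * b)"
    using assms(2) unfolding rs_def by (intro sum_mono mult_left_mono) auto
  also have "\<dots> = (\<Sum>l<K. \<bar>A (i,l)\<bar>) * b" by (simp add: sum_distrib_right)
  also have "\<dots> \<le> a * b"
    using assms(1) i assms(3) unfolding rs_def by (intro mult_right_mono) auto
  finally show "(\<Sum>j<K. \<bar>mmul K A B (i,j)\<bar>) \<le> a * b" .
qed

lemma rs_add: "rs K A a \<Longrightarrow> rs K B b \<Longrightarrow> rs K (\<lambda>ij. A ij + B ij) (a + b)"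
  unfolding rs_def
proof (intro allI impI)
  fix i assume h: "\<forall>i<K. (\<Sum>j<K. \<bar>A (i, j)\<bar>) \<le> a" "\<forall>i<K. (\<Sum>j<K. \<bar>B (i, j)\<bar>) \<le> b" "i < K"
  have "(\<Sum>j<K. \<bar>A (i, j) + B (i, j)\<bar>) \<le> (\<Sum>j<K. \<bar>A (i, j)\<bar> + \<bar>B (i, j)\<bar>)"
    by (intro sum_mono abs_triangle_ineq)
  also have "\<dots> = (\<Sum>j<K. \<bar>A (i, j)\<bar>) + (\<Sum>j<K. \<bar>B (i, j)\<bar>)" by (simp add: sum.distrib)
  finally show "(\<Sum>j<K. \<bar>A (i, j) + B (i, j)\<bar>) \<le> a + b" using h by force
qed

lemma rs_scale: "rs K A a \<Longrightarrow> 0 \<le> c \<Longrightarrow> rs K (\<lambda>ij. c * A ij) (c * a)"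
  unfolding rs_def by (auto simp: abs_mult sum_distrib_left[symmetric] intro: mult_left_mono)

lemma rs_entry: "rs K A a \<Longrightarrow> i < K \<Longrightarrow> j < K \<Longrightarrow> \<bar>A (i,j)\<bar> \<le> a"
  unfolding rs_def
  by (metis (no_types, lifting) finite_lessThan lessThan_iff member_le_sum abs_ge_zero order_trans)

primrec Bit :: "nat \<Rightarrow> (nat \<times> nat \<Rightarrow> real) \<Rightarrow> nat \<Rightarrow> (nat \<times> nat \<Rightarrow> real)" where
  "Bit K A 0 = (\<lambda>_. 0)"
| "Bit K A (Suc m) = (\<lambda>ij. (A ij + mmul K (Bit K A m) (Bit K A m) ij) / 2)"

lemma rs_cong: "(\<And>i j. i < K \<Longrightarrow> j < K \<Longrightarrow> A (i,j) = B (i,j)) \<Longrightarrow> rs K A a \<Longrightarrow> rs K B a"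
  unfolding rs_def by (metis (no_types, lifting) lessThan_iff sum.cong)

lemma rs_mono: "rs K A a \<Longrightarrow> a \<le> b \<Longrightarrow> rs K A b"
  unfolding rs_def by force

lemma rs_cong_mono: "rs K A a \<Longrightarrow> (\<And>i j. i < K \<Longrightarrow> j < K \<Longrightarrow> A (i,j) = B (i,j)) \<Longrightarrow> a \<le> b \<Longrightarrow> rs K B b"
  using rs_cong rs_mono by metis

lemma rs_zero: "0 \<le> a \<Longrightarrow> rs K (\<lambda>_. 0) a"
  unfolding rs_def by simp

lemma abs_prod_le: "\<bar>x * (y::real)\<bar> \<le> (x^2 + y^2) / 2"
proof -
  have "0 \<le> (\<bar>x\<bar> - \<bar>y\<bar>)^2" by simp
  then show ?thesis by (simp add: power2_eq_square algebra_simps abs_mult)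
qed

lemma quad_bound:
  assumes rsB: "rs K B r" and sym: "\<And>i j. i < K \<Longrightarrow> j < K \<Longrightarrow> B (i,j) = B (j,i)"
  shows "\<bar>\<Sum>i<K. \<Sum>j<K. v i * B (i,j) * v j\<bar> \<le> r * (\<Sum>i<K. (v i)^2)"
proof -
  have "\<bar>\<Sum>i<K. \<Sum>j<K. v i * B (i,j) * v j\<bar> \<le> (\<Sum>i<K. \<Sum>j<K. \<bar>B (i,j)\<bar> * (((v i)^2 + (v j)^2) / 2))"
  proof -
    have "\<bar>\<Sum>i<K. \<Sum>j<K. v i * B (i,j) * v j\<bar> \<le> (\<Sum>i<K. \<Sum>j<K. \<bar>v i * B (i,j) * v j\<bar>)"
      by (rule order.trans[OF sum_abs sum_mono[OF sum_abs]])
    also have "\<dots> \<le> (\<Sum>i<K. \<Sum>j<K. \<bar>B (i,j)\<bar> * (((v i)^2 + (v j)^2) / 2))"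
    proof (intro sum_mono)
      fix i j
      have "\<bar>v i * B (i,j) * v j\<bar> = \<bar>B (i,j)\<bar> * \<bar>v i * v j\<bar>" by (simp add: abs_mult)
      also have "\<dots> \<le> \<bar>B (i,j)\<bar> * (((v i)^2 + (v j)^2) / 2)"
        by (intro mult_left_mono abs_prod_le) simp
      finally show "\<bar>v i * B (i,j) * v j\<bar> \<le> \<bar>B (i,j)\<bar> * (((v i)^2 + (v j)^2) / 2)" .
    qed
    finally show ?thesis .
  qed
  also have "\<dots> = (\<Sum>i<K. (v i)^2 * (\<Sum>j<K. \<bar>B (i,j)\<bar>)) / 2 + (\<Sum>j<K. (v j)^2 * (\<Sum>i<K. \<bar>B (i,j)\<bar>)) / 2"
  proof -
    have e1: "(\<Sum>i<K. \<Sum>j<K. \<bar>B (i,j)\<bar> * (((v i)^2 + (v j)^2) / 2))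
        = (\<Sum>i<K. \<Sum>j<K. \<bar>B (i,j)\<bar> * (v i)^2) / 2 + (\<Sum>i<K. \<Sum>j<K. \<bar>B (i,j)\<bar> * (v j)^2) / 2"
      unfolding sum_divide_distrib sum.distrib[symmetric] by (intro sum.cong refl) (simp add: field_simps)
    have e2: "(\<Sum>i<K. \<Sum>j<K. \<bar>B (i,j)\<bar> * (v i)^2) = (\<Sum>i<K. (v i)^2 * (\<Sum>j<K. \<bar>B (i,j)\<bar>))"
      by (simp add: sum_distrib_left mult.commute)
    have e3: "(\<Sum>i<K. \<Sum>j<K. \<bar>B (i,j)\<bar> * (v j)^2) = (\<Sum>j<K. (v j)^2 * (\<Sum>i<K. \<bar>B (i,j)\<bar>))"
      by (subst sum.swap) (simp add: sum_distrib_left mult.commute)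
    show ?thesis unfolding e1 e2 e3 ..
  qed
  also have "\<dots> \<le> (\<Sum>i<K. (v i)^2 * r) / 2 + (\<Sum>j<K. (v j)^2 * r) / 2"
  proof -
    have "(\<Sum>i<K. (v i)^2 * (\<Sum>j<K. \<bar>B (i,j)\<bar>)) \<le> (\<Sum>i<K. (v i)^2 * r)"
      using rsB unfolding rs_def by (intro sum_mono mult_left_mono) auto
    moreover have "(\<Sum>j<K. (v j)^2 * (\<Sum>i<K. \<bar>B (i,j)\<bar>)) \<le> (\<Sum>j<K. (v j)^2 * r)"
    proof (intro sum_mono mult_left_mono)
      fix j assume j: "j \<in> {..<K}"
      have "(\<Sum>i<K. \<bar>B (i,j)\<bar>) = (\<Sum>i<K. \<bar>B (j,i)\<bar>)" using j sym by (intro sum.cong) auto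
      then show "(\<Sum>i<K. \<bar>B (i,j)\<bar>) \<le> r" using rsB j unfolding rs_def by auto
    qed simp
    ultimately show ?thesis by simp
  qed
  also have "\<dots> = r * (\<Sum>i<K. (v i)^2)" by (simp add: sum_distrib_left algebra_simps)
  finally show ?thesis .
qed

locale sqit =
  fixes K :: nat and A :: "nat \<times> nat \<Rightarrow> real" and a :: real
  assumes rsA: "rs K A a" and a0: "0 \<le> a" and a1: "a < 1"
    and symA: "\<And>i j. i < K \<Longrightarrow> j < K \<Longrightarrow> A (i,j) = A (j,i)"
begin

definition "r = (1 + a) / 2"

lemma r0: "0 \<le> r" and r1: "r < 1" and ar: "(a + r * r) / 2 \<le> r"
proof -
  show "0 \<le> r" "r < 1" using a0 a1 by (auto simp: r_def)
  have "a * a \<le> a" using a0 a1 mult_right_mono[of a 1 a] by simp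
  then have "(1 - r)^2 \<le> 1 - a" using a0 a1 by (simp add: r_def power2_eq_square field_simps)
  then show "(a + r * r) / 2 \<le> r" by (simp add: power2_eq_square algebra_simps)
qed

abbreviation "B m \<equiv> Bit K A m"

lemma rsB: "rs K (B m) r"
proof (induction m)
  case 0 then show ?case using r0 by (simp add: rs_zero)
next
  case (Suc m)
  have "rs K (mmul K (B m) (B m)) (r * r)" by (rule rs_mul[OF Suc Suc r0])
  then have "rs K (\<lambda>ij. A ij + mmul K (B m) (B m) ij) (a + r * r)" by (rule rs_add[OF rsA])
  then have "rs K (\<lambda>ij. (1/2) * (A ij + mmul K (B m) (B m) ij)) ((1/2) * (a + r * r))"
    by (rule rs_scale) simp
  then show ?case using ar by (auto intro: rs_mono simp: rs_def)
qed

lemma symB: "i < K \<Longrightarrow> j < K \<Longrightarrow> B m (i,j) = B m (j,i)"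
proof (induction m arbitrary: i j)
  case 0 then show ?case by simp
next
  case (Suc m)
  have "mmul K (B m) (B m) (i,j) = mmul K (B m) (B m) (j,i)"
    unfolding mmul_apply using Suc by (intro sum.cong) (auto simp: mult.commute)
  then show ?case using symA[OF Suc.prems] by simp
qed

definition "D m = (\<lambda>ij. B (Suc m) ij - B m ij)"

lemma D_rec: "D (Suc m) ij = (mmul K (B (Suc m)) (D m) ij + mmul K (D m) (B m) ij) / 2"
proof -
  obtain i j where ij: "ij = (i,j)" by force
  have "mmul K (B (Suc m)) (B (Suc m)) (i,j) - mmul K (B m) (B m) (i,j)
     = mmul K (B (Suc m)) (D m) (i,j) + mmul K (D m) (B m) (i,j)"
    unfolding mmul_apply D_def sum_subtractf[symmetric] sum.distrib[symmetric]
    by (intro sum.cong refl) (simp add: algebra_simps)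
  then show ?thesis unfolding D_def ij by (simp add: field_simps)
qed

lemma rsD: "rs K (D m) (a / 2 * r ^ m)"
proof (induction m)
  case 0
  have "rs K (\<lambda>ij. (1/2) * A ij) ((1/2) * a)" by (rule rs_scale[OF rsA]) simp
  then show ?case by (rule rs_cong_mono) (simp_all add: D_def mmul_apply)
next
  case (Suc m)
  have d0: "0 \<le> a / 2 * r ^ m" using a0 r0 by simp
  have "rs K (mmul K (B (Suc m)) (D m)) (r * (a / 2 * r ^ m))" by (rule rs_mul[OF rsB Suc d0])
  moreover have "rs K (mmul K (D m) (B m)) ((a / 2 * r ^ m) * r)" by (rule rs_mul[OF Suc rsB r0])
  ultimately have "rs K (\<lambda>ij. mmul K (B (Suc m)) (D m) ij + mmul K (D m) (B m) ij)
      (r * (a / 2 * r ^ m) + (a / 2 * r ^ m) * r)" by (rule rs_add)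
  then have "rs K (\<lambda>ij. (1/2) * (mmul K (B (Suc m)) (D m) ij + mmul K (D m) (B m) ij))
      ((1/2) * (r * (a / 2 * r ^ m) + (a / 2 * r ^ m) * r))" by (rule rs_scale) simp
  then show ?case by (rule rs_cong_mono) (simp_all add: D_rec algebra_simps)
qed

lemma Dbound: "i < K \<Longrightarrow> j < K \<Longrightarrow> \<bar>D m (i,j)\<bar> \<le> a / 2 * r ^ m"
  using rs_entry[OF rsD] by blast

lemma summD: "i < K \<Longrightarrow> j < K \<Longrightarrow> summable (\<lambda>m. D m (i,j))"
  by (rule summable_comparison_test'[where g="\<lambda>m. a / 2 * r ^ m"])
     (use Dbound r0 r1 in \<open>simp_all add: summable_geometric\<close>)

lemma B_sum: "B m ij = (\<Sum>k<m. D k ij)"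
  by (induction m) (simp_all add: D_def)

definition "Bl = (\<lambda>(i,j). if i < K \<and> j < K then (\<Sum>m. D m (i,j)) else 0)"

lemma B_lim: "i < K \<Longrightarrow> j < K \<Longrightarrow> (\<lambda>m. B m (i,j)) \<longlonglongrightarrow> Bl (i,j)"
  unfolding B_sum Bl_def using summD by (simp add: summable_LIMSEQ)

lemma Bl_fix: assumes "i < K" "j < K"
  shows "Bl (i,j) = (A (i,j) + (\<Sum>l<K. Bl (i,l) * Bl (l,j))) / 2"
proof -
  have "(\<lambda>m. B (Suc m) (i,j)) \<longlonglongrightarrow> Bl (i,j)"
    using B_lim[OF assms] by (rule LIMSEQ_Suc)
  moreover have "(\<lambda>m. B (Suc m) (i,j)) \<longlonglongrightarrow> (A (i,j) + (\<Sum>l<K. Bl (i,l) * Bl (l,j))) / 2"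
    unfolding Bit.simps mmul_apply using assms
    by (intro tendsto_intros B_lim) auto
  ultimately show ?thesis by (rule LIMSEQ_unique)
qed

lemma rsBl: "rs K Bl r"
  unfolding rs_def
proof (intro allI impI)
  fix i assume i: "i < K"
  have "(\<lambda>m. \<Sum>j<K. \<bar>B m (i,j)\<bar>) \<longlonglongrightarrow> (\<Sum>j<K. \<bar>Bl (i,j)\<bar>)"
    using i by (intro tendsto_intros B_lim) auto
  moreover have "\<And>m. (\<Sum>j<K. \<bar>B m (i,j)\<bar>) \<le> r" using rsB i unfolding rs_def by blast
  ultimately show "(\<Sum>j<K. \<bar>Bl (i,j)\<bar>) \<le> r"
    by (intro LIMSEQ_le_const2) auto
qed

lemma symBl: assumes "i < K" "j < K" shows "Bl (i,j) = Bl (j,i)"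
proof -
  have "(\<lambda>m. B m (i,j)) \<longlonglongrightarrow> Bl (j,i)" using B_lim[of j i] symB[of j i] assms by simp
  then show ?thesis using B_lim[OF assms] by (rule LIMSEQ_unique[rotated])
qed

definition "R0 = (\<lambda>(i,j). if i < K \<and> j < K then (if i = j then 1 else 0) - Bl (i,j) else 0)"

lemma R0_sq: assumes "i < K" "j < K"
  shows "(\<Sum>l<K. R0 (i,l) * R0 (l,j)) = (if i = j then 1 else 0) - A (i,j)"
proof -
  have "(\<Sum>l<K. R0 (i,l) * R0 (l,j)) = (\<Sum>l<K. (if l = i then (if l = j then 1 else 0) else 0)
       - (if l = i then Bl (l,j) else 0) - (if l = j then Bl (i,l) else 0) + Bl (i,l) * Bl (l,j))"
    using assms by (intro sum.cong refl) (auto simp: R0_def algebra_simps)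
  also have "\<dots> = (if i = j then 1 else 0) - Bl (i,j) - Bl (i,j) + (\<Sum>l<K. Bl (i,l) * Bl (l,j))"
    using assms by (simp add: sum.distrib sum_subtractf)
  also have "\<dots> = (if i = j then 1 else 0) - A (i,j)"
    using Bl_fix[OF assms] by simp
  finally show ?thesis .
qed

lemma symR0: "R0 (i,j) = R0 (j,i)"
  unfolding R0_def using symBl by auto

lemma sqmatR0: "sqmat K R0"
  unfolding sqmat_def R0_def by auto

lemma quadR0: "(\<Sum>i<K. \<Sum>j<K. v i * R0 (i,j) * v j) \<ge> (1 - r) * (\<Sum>i<K. (v i)^2)"
proof -
  have "(\<Sum>i<K. \<Sum>j<K. v i * R0 (i,j) * v j) = (\<Sum>i<K. \<Sum>j<K. (if j = i then v i * v j else 0) - v i * Bl (i,j) * v j)"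
    by (intro sum.cong refl) (auto simp: R0_def algebra_simps)
  also have "\<dots> = (\<Sum>i<K. (v i)^2) - (\<Sum>i<K. \<Sum>j<K. v i * Bl (i,j) * v j)"
    by (simp add: sum_subtractf power2_eq_square)
  finally have e: "(\<Sum>i<K. \<Sum>j<K. v i * R0 (i,j) * v j) = (\<Sum>i<K. (v i)^2) - (\<Sum>i<K. \<Sum>j<K. v i * Bl (i,j) * v j)" .
  have "\<bar>\<Sum>i<K. \<Sum>j<K. v i * Bl (i,j) * v j\<bar> \<le> r * (\<Sum>i<K. (v i)^2)"
    by (rule quad_bound[OF rsBl symBl])
  then show ?thesis unfolding e by (simp add: algebra_simps)
qed

end

lemma sqrt_exists:
  assumes K: "K \<ge> 1" and M: "M \<in> DK K" and s: "0 < s"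
  shows "\<exists>R. sqmat K R \<and> posdef_mat K R \<and>
       (\<forall>i<K. \<forall>j<K. (\<Sum>l<K. R (i,l) * R (l,j)) = s * M (i,j))"
proof -
  define c where "c = 2 * real K + 1"
  have c0: "c > 0" unfolding c_def by simp
  define A where "A = (\<lambda>(i,j). (if i = j then 1 else 0) - M (i,j) / c)"
  define a where "a = (2 * real K - 1) / c"
  have Mp: "\<And>i j. i < K \<Longrightarrow> j < K \<Longrightarrow> i \<noteq> j \<Longrightarrow> 1 < M (i,j) \<and> M (i,j) < 2"
    "\<And>i. i < K \<Longrightarrow> 2 * real K < M (i,i) \<and> M (i,i) < 2 * real K + 1"
    "\<And>i j. i < K \<Longrightarrow> j < K \<Longrightarrow> M (i,j) = M (j,i)"
    using M unfolding DK_def symmetric_mat_def by auto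
  have Aent: "\<bar>A (i,j)\<bar> \<le> 2 / c - (if j = i then 1 / c else 0)" if "i < K" "j < K" for i j
  proof (cases "i = j")
    case True
    have h: "c - 1 < M (j,j)" "M (j,j) < c" using Mp(2)[OF that(2)] by (auto simp: c_def)
    have "0 \<le> 1 - M (j,j) / c" using h c0 by (simp add: field_simps)
    moreover have "1 - M (j,j) / c \<le> 1 / c"
    proof -
      have "1 - M (j,j) / c = (c - M (j,j)) / c" using c0 by (simp add: field_simps)
      also have "\<dots> \<le> 1 / c" using h c0 by (intro divide_right_mono) auto
      finally show ?thesis .
    qed
    ultimately show ?thesis using True by (simp add: A_def)
  next
    case False
    then show ?thesis using Mp(1)[OF that False] c0 by (simp add: A_def field_simps)
  qed
  have rsA: "rs K A a"
    unfolding rs_def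
  proof (intro allI impI)
    fix i assume i: "i < K"
    have "(\<Sum>j<K. \<bar>A (i,j)\<bar>) \<le> (\<Sum>j<K. 2 / c - (if j = i then 1 / c else 0))"
      using Aent i by (intro sum_mono) auto
    also have "\<dots> = real K * (2 / c) - 1 / c" using i by (simp add: sum_subtractf)
    also have "\<dots> = a" unfolding a_def using c0 by (simp add: field_simps)
    finally show "(\<Sum>j<K. \<bar>A (i,j)\<bar>) \<le> a" .
  qed
  have a0: "0 \<le> a" using K c0 by (simp add: a_def)
  have a1: "a < 1" using c0 by (simp add: a_def c_def)
  have symA: "\<And>i j. i < K \<Longrightarrow> j < K \<Longrightarrow> A (i,j) = A (j,i)"
    using Mp(3) by (auto simp: A_def)
  interpret sqit K A a using rsA a0 a1 symA by unfold_locales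
  define R where "R = (\<lambda>ij. sqrt (s * c) * R0 ij)"
  have "sqmat K R" using sqmatR0 unfolding sqmat_def R_def by simp
  moreover have "posdef_mat K R"
    unfolding posdef_mat_def symmetric_mat_def
  proof (intro conjI allI impI)
    show "\<And>i j. i < K \<Longrightarrow> j < K \<Longrightarrow> R (i,j) = R (j,i)" unfolding R_def using symR0 by simp
    fix v :: "nat \<Rightarrow> real" assume "\<exists>i<K. v i \<noteq> 0"
    then obtain i where i: "i < K" "v i \<noteq> 0" by blast
    have "0 < (v i)^2" using i by simp
    also have "\<dots> \<le> (\<Sum>i<K. (v i)^2)" using i by (intro member_le_sum) auto
    finally have pos: "0 < (\<Sum>i<K. (v i)^2)" .
    have "0 < (1 - r) * (\<Sum>i<K. (v i)^2)" using r1 pos by simp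
    also have "\<dots> \<le> (\<Sum>i<K. \<Sum>j<K. v i * R0 (i,j) * v j)" by (rule quadR0)
    finally have q: "0 < (\<Sum>i<K. \<Sum>j<K. v i * R0 (i,j) * v j)" .
    have "(\<Sum>i<K. \<Sum>j<K. v i * R (i,j) * v j) = sqrt (s * c) * (\<Sum>i<K. \<Sum>j<K. v i * R0 (i,j) * v j)"
      unfolding R_def by (simp add: sum_distrib_left algebra_simps)
    then show "0 < (\<Sum>i<K. \<Sum>j<K. v i * R (i,j) * v j)" using q s c0 by simp
  qed
  moreover have "\<forall>i<K. \<forall>j<K. (\<Sum>l<K. R (i,l) * R (l,j)) = s * M (i,j)"
  proof (intro allI impI)
    fix i j assume ij: "i < K" "j < K"
    have ss: "sqrt (s * c) * sqrt (s * c) = s * c" using s c0 by simp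
    have "(\<Sum>l<K. R (i,l) * R (l,j)) = (\<Sum>l<K. (s * c) * (R0 (i,l) * R0 (l,j)))"
    proof (intro sum.cong refl)
      fix l
      have "R (i,l) * R (l,j) = (sqrt (s * c) * sqrt (s * c)) * (R0 (i,l) * R0 (l,j))"
        unfolding R_def by (simp add: algebra_simps)
      then show "R (i,l) * R (l,j) = (s * c) * (R0 (i,l) * R0 (l,j))" by (simp only: ss)
    qed
    also have "\<dots> = (s * c) * (\<Sum>l<K. R0 (i,l) * R0 (l,j))" by (simp add: sum_distrib_left)
    also have "\<dots> = s * M (i,j)" using R0_sq[OF ij] c0 by (simp add: A_def field_simps)
    finally show "(\<Sum>l<K. R (i,l) * R (l,j)) = s * M (i,j)" .
  qed
  ultimately show ?thesis by blast
qed

lemma posdef_nonneg: "posdef_mat K R \<Longrightarrow> 0 \<le> (\<Sum>i<K. \<Sum>j<K. v i * R (i,j) * v j)"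
  unfolding posdef_mat_def by (cases "\<exists>i<K. v i \<noteq> 0") (auto intro: less_imp_le)

lemma sqrt_unique:
  assumes R1: "sqmat K R1" "posdef_mat K R1" and R2: "sqmat K R2" "posdef_mat K R2"
    and eq: "\<forall>i<K. \<forall>j<K. (\<Sum>l<K. R1 (i,l) * R1 (l,j)) = (\<Sum>l<K. R2 (i,l) * R2 (l,j))"
  shows "R1 = R2"
proof -
  define D where "D = (\<lambda>ij. R1 ij - R2 ij)"
  have z: "(\<Sum>l<K. R1 (i,l) * D (l,j)) + (\<Sum>l<K. D (i,l) * R2 (l,j)) = 0" if "i < K" "j < K" for i j
  proof -
    have "(\<Sum>l<K. R1 (i,l) * D (l,j)) + (\<Sum>l<K. D (i,l) * R2 (l,j))
        = (\<Sum>l<K. R1 (i,l) * R1 (l,j)) - (\<Sum>l<K. R2 (i,l) * R2 (l,j))"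
      unfolding D_def sum_subtractf[symmetric] sum.distrib[symmetric]
      by (intro sum.cong refl) (simp add: algebra_simps)
    then show ?thesis using eq that by simp
  qed
  have "0 = (\<Sum>j<K. \<Sum>i<K. D (i,j) * ((\<Sum>l<K. R1 (i,l) * D (l,j)) + (\<Sum>l<K. D (i,l) * R2 (l,j))))"
    using z by simp
  also have "\<dots> = (\<Sum>j<K. \<Sum>i<K. \<Sum>l<K. D (i,j) * R1 (i,l) * D (l,j))
      + (\<Sum>j<K. \<Sum>i<K. \<Sum>l<K. D (i,j) * D (i,l) * R2 (l,j))"
    by (simp add: sum.distrib[symmetric] sum_distrib_left distrib_left mult.assoc)
  also have "(\<Sum>j<K. \<Sum>i<K. \<Sum>l<K. D (i,j) * D (i,l) * R2 (l,j))
      = (\<Sum>i<K. \<Sum>l<K. \<Sum>j<K. D (i,l) * R2 (l,j) * D (i,j))"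
  proof -
    have "(\<Sum>j<K. \<Sum>i<K. \<Sum>l<K. D (i,j) * D (i,l) * R2 (l,j))
        = (\<Sum>i<K. \<Sum>j<K. \<Sum>l<K. D (i,j) * D (i,l) * R2 (l,j))" by (rule sum.swap)
    also have "\<dots> = (\<Sum>i<K. \<Sum>l<K. \<Sum>j<K. D (i,j) * D (i,l) * R2 (l,j))"
      by (rule sum.cong[OF refl]) (rule sum.swap)
    also have "\<dots> = (\<Sum>i<K. \<Sum>l<K. \<Sum>j<K. D (i,l) * R2 (l,j) * D (i,j))"
      by (intro sum.cong refl) (simp add: mult_ac)
    finally show ?thesis .
  qed
  finally have tot: "0 = (\<Sum>j<K. \<Sum>i<K. \<Sum>l<K. D (i,j) * R1 (i,l) * D (l,j))
      + (\<Sum>i<K. \<Sum>l<K. \<Sum>j<K. D (i,l) * R2 (l,j) * D (i,j))" .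
  have n1: "0 \<le> (\<Sum>i<K. \<Sum>l<K. D (i,j) * R1 (i,l) * D (l,j))" for j
    using posdef_nonneg[OF R1(2), of "\<lambda>i. D (i,j)"] by simp
  have n2: "0 \<le> (\<Sum>l<K. \<Sum>j<K. D (i,l) * R2 (l,j) * D (i,j))" for i
    using posdef_nonneg[OF R2(2), of "\<lambda>l. D (i,l)"] by simp
  have "(\<Sum>j<K. \<Sum>i<K. \<Sum>l<K. D (i,j) * R1 (i,l) * D (l,j)) = 0"
  proof -
    have "0 \<le> (\<Sum>j<K. \<Sum>i<K. \<Sum>l<K. D (i,j) * R1 (i,l) * D (l,j))" by (intro sum_nonneg n1)
    moreover have "0 \<le> (\<Sum>i<K. \<Sum>l<K. \<Sum>j<K. D (i,l) * R2 (l,j) * D (i,j))" by (intro sum_nonneg n2)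
    ultimately show ?thesis using tot by linarith
  qed
  then have col0: "\<And>j. j < K \<Longrightarrow> (\<Sum>i<K. \<Sum>l<K. D (i,j) * R1 (i,l) * D (l,j)) = 0"
    using sum_nonneg_eq_0_iff[of "{..<K}", OF _ n1] by auto
  show ?thesis
  proof (rule ext, clarify)
    fix i j
    show "R1 (i,j) = R2 (i,j)"
    proof (cases "i < K \<and> j < K")
      case True
      show ?thesis
      proof (rule ccontr)
        assume "R1 (i,j) \<noteq> R2 (i,j)"
        then have "\<exists>i'<K. D (i',j) \<noteq> 0" using True by (auto simp: D_def)
        then have "0 < (\<Sum>i<K. \<Sum>l<K. D (i,j) * R1 (i,l) * D (l,j))"
          using R1(2) unfolding posdef_mat_def
          by (auto dest!: spec[where x="\<lambda>i. D (i,j)"])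
        then show False using col0 True by simp
      qed
    next
      case False
      then show ?thesis using R1(1) R2(1) unfolding sqmat_def by auto
    qed
  qed
qed

lemma sqrtm_props:
  assumes K: "K \<ge> 1" and L: "L \<in> DnK s K" and s: "0 < s"
  shows "sqmat K (sqrtm K L)" "posdef_mat K (sqrtm K L)"
    "\<And>i j. i < K \<Longrightarrow> j < K \<Longrightarrow> (\<Sum>l<K. sqrtm K L (i,l) * sqrtm K L (l,j)) = L (i,j)"
proof -
  obtain M where M: "M \<in> DK K" and LM: "L = (\<lambda>ij. s * M ij)" using L unfolding DnK_def by blast
  obtain R where R: "sqmat K R \<and> posdef_mat K R \<and> (\<forall>i<K. \<forall>j<K. (\<Sum>l<K. R (i,l) * R (l,j)) = L (i,j))"
    using sqrt_exists[OF K M s] LM by auto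
  have ex: "\<exists>!R. sqmat K R \<and> posdef_mat K R \<and> (\<forall>i<K. \<forall>j<K. (\<Sum>l<K. R (i,l) * R (l,j)) = L (i,j))"
  proof (rule ex1I[of _ R])
    show "sqmat K R \<and> posdef_mat K R \<and> (\<forall>i<K. \<forall>j<K. (\<Sum>l<K. R (i,l) * R (l,j)) = L (i,j))" by (rule R)
    fix R' assume "sqmat K R' \<and> posdef_mat K R' \<and> (\<forall>i<K. \<forall>j<K. (\<Sum>l<K. R' (i,l) * R' (l,j)) = L (i,j))"
    then show "R' = R" using R by (intro sqrt_unique) auto
  qed
  note th = theI'[OF ex, folded sqrtm_def]
  show "sqmat K (sqrtm K L)" "posdef_mat K (sqrtm K L)" using th by auto
  show "\<And>i j. i < K \<Longrightarrow> j < K \<Longrightarrow> (\<Sum>l<K. sqrtm K L (i,l) * sqrtm K L (l,j)) = L (i,j)"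
    using th by auto
qed

lemma sqrtm_bound:
  assumes K: "K \<ge> 1" and L: "L \<in> DnK s K" and s: "0 < s"
  shows "\<bar>sqrtm K L (i,j)\<bar> \<le> sqrt (s * (2 * real K + 1))"
proof (cases "i < K \<and> j < K")
  case False
  then have "sqrtm K L (i,j) = 0" using sqrtm_props(1)[OF K L s] unfolding sqmat_def by auto
  then show ?thesis using s by simp
next
  case True
  let ?R = "sqrtm K L"
  obtain M where M: "M \<in> DK K" and LM: "L = (\<lambda>ij. s * M ij)" using L unfolding DnK_def by blast
  have sym: "\<And>a b. a < K \<Longrightarrow> b < K \<Longrightarrow> ?R (a,b) = ?R (b,a)"
    using sqrtm_props(2)[OF K L s] unfolding posdef_mat_def symmetric_mat_def by auto
  have "(?R (i,j))^2 \<le> (\<Sum>l<K. (?R (l,j))^2)"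
    using True by (intro member_le_sum) auto
  also have "\<dots> = (\<Sum>l<K. ?R (j,l) * ?R (l,j))"
    using True sym by (intro sum.cong refl) (auto simp: power2_eq_square)
  also have "\<dots> = L (j,j)" using sqrtm_props(3)[OF K L s] True by auto
  also have "\<dots> \<le> s * (2 * real K + 1)"
    using M True s unfolding LM DK_def by (auto intro: less_imp_le)
  finally have "(?R (i,j))^2 \<le> s * (2 * real K + 1)" .
  then have "sqrt ((?R (i,j))^2) \<le> sqrt (s * (2 * real K + 1))" by (rule real_sqrt_le_mono)
  then show ?thesis by simp
qed

lemma comp_meas[measurable]: "(\<lambda>x. x j) \<in> borel_measurable (Mat n K)"
proof (cases "j \<in> idx n K")
  case True
  then show ?thesis unfolding Mat_def by (rule measurable_component_singleton)
next
  case False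
  have sp: "x j = undefined" if "x \<in> space (Mat n K)" for x
    using False that by (cases j) (auto simp: Mat_def space_PiM PiE_def extensional_def)
  show ?thesis
    by (rule measurable_cong[THEN iffD2, OF sp measurable_const[of undefined]]) simp_all
qed

lemma sets_Gauss: "sets (Gauss n K) = sets (Mat n K)"
  unfolding Gauss_def Mat_def by (intro sets_PiM_cong) simp_all

lemma space_Gauss: "space (Gauss n K) = space (Mat n K)"
  using sets_Gauss by (rule sets_eq_imp_space_eq)

lemma finite_idx[simp]: "finite (idx n K)" unfolding idx_def by simp
lemma card_idx: "card (idx n K) = n * K" unfolding idx_def by (simp add: card_cartesian_product)

lemma mmul_meas[measurable]: "(\<lambda>x. mmul K x R ik) \<in> borel_measurable (Mat n K')"
  unfolding mmul_def by (cases ik) simp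

lemma Ham_meas: "(\<lambda>(x, Y). Ham n K L x Y) \<in> borel_measurable (Mat n K' \<Otimes>\<^sub>M Mat n K')"
  unfolding Ham_def Let_def by measurable

lemma mmul_bound:
  assumes x: "\<forall>ik\<in>idx n K. \<bar>x ik\<bar> \<le> S" and R: "\<And>i j. \<bar>R (i,j)\<bar> \<le> \<rho>"
    and ik: "ik \<in> idx n K" and S: "0 \<le> S"
  shows "\<bar>mmul K x R ik\<bar> \<le> real K * S * \<rho>"
proof -
  obtain i k where ik': "ik = (i,k)" by force
  have i: "i < n" using ik ik' by (simp add: idx_def)
  have "\<bar>mmul K x R ik\<bar> \<le> (\<Sum>l<K. \<bar>x (i,l)\<bar> * \<bar>R (l,k)\<bar>)"
    unfolding ik' mmul_def by (simp add: order.trans[OF sum_abs] abs_mult)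
  also have "\<dots> \<le> (\<Sum>l<K. S * \<rho>)"
    using x i R S by (intro sum_mono mult_mono) (auto simp: idx_def)
  finally show ?thesis by simp
qed

lemma Ham_split:
  "- Ham n K L x (\<lambda>ik. V ik + Z ik) =
     (- (1/2) * (\<Sum>ik\<in>idx n K. (mmul K x (sqrtm K L) ik)^2)
      + (\<Sum>ik\<in>idx n K. V ik * mmul K x (sqrtm K L) ik))
     + (\<Sum>ik\<in>idx n K. Z ik * mmul K x (sqrtm K L) ik)"
  unfolding Ham_def Let_def by (simp add: distrib_right sum.distrib)

lemma Ham_meas1[measurable]: "(\<lambda>x. Ham n K L x Y) \<in> borel_measurable (Mat n K')"
  unfolding Ham_def Let_def by measurable

locale core =
  fixes n K :: nat and S \<rho> :: real and L :: "nat \<times> nat \<Rightarrow> real"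
    and P :: "(nat \<times> nat \<Rightarrow> real) measure" and p :: "(nat \<times> nat \<Rightarrow> real) \<Rightarrow> real"
    and X :: "nat \<times> nat \<Rightarrow> real"
  assumes n: "n \<ge> 1" and S: "0 \<le> S" and \<rho>: "0 \<le> \<rho>"
    and Rb: "\<And>i j. \<bar>sqrtm K L (i,j)\<bar> \<le> \<rho>"
    and P: "prob_space P" and sP: "sets P = sets (Mat n K)"
    and Pb: "AE x in P. \<forall>ik\<in>idx n K. \<bar>x ik\<bar> \<le> S"
    and pm[measurable]: "p \<in> borel_measurable (Mat n K)" and p0: "\<And>x. 0 \<le> p x"
    and Xb: "\<forall>ik\<in>idx n K. \<bar>X ik\<bar> \<le> S"
begin

interpretation P: prob_space P by (rule P)

abbreviation "R \<equiv> sqrtm K L"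
definition "\<beta> = real K * S * \<rho>"
definition "a x ik = mmul K x R ik" for x ik
definition "b x = - (1/2) * (\<Sum>ik\<in>idx n K. (a x ik)^2) + (\<Sum>ik\<in>idx n K. mmul K X R ik * a x ik)" for x
definition "B0 = 3/2 * real n * real K * \<beta>^2"
definition "t Z x = (\<Sum>ik\<in>idx n K. Z ik * a x ik)" for Z x
definition "Y Z = (\<lambda>ik. mmul K X R ik + Z ik)" for Z
definition "G Z = (\<integral>x. p x * exp (- Ham n K L x (Y Z)) \<partial>P)" for Z
definition "A0 = (\<integral>x. p x \<partial>P)"
definition "Dv Z = - (1 / real n) * ln (G Z) - (- (1 / real n) * ln A0)" for Z
definition "good x \<longleftrightarrow> (\<forall>ik\<in>idx n K. \<bar>x ik\<bar> \<le> S)" for x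
definition "MZ Z = B0 + \<beta> * (\<Sum>ik\<in>idx n K. \<bar>Z ik\<bar>)" for Z

lemma \<beta>0: "0 \<le> \<beta>" using S \<rho> by (simp add: \<beta>_def)
lemma B00: "0 \<le> B0" by (simp add: B0_def)
lemma MZ0: "0 \<le> MZ Z" using B00 \<beta>0 by (simp add: MZ_def sum_nonneg)

lemma u_eq: "- Ham n K L x (Y Z) = b x + t Z x"
  unfolding Y_def b_def t_def a_def by (rule Ham_split)

lemma aeP_good: "AE x in P. good x" using Pb by (simp add: good_def)

lemma a_bound: assumes "good x" "ik \<in> idx n K" shows "\<bar>a x ik\<bar> \<le> \<beta>"
  unfolding a_def \<beta>_def by (rule mmul_bound[where \<rho>=\<rho>]) (use assms Rb S in \<open>auto simp: good_def\<close>)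

lemma aX_bound: assumes "ik \<in> idx n K" shows "\<bar>mmul K X R ik\<bar> \<le> \<beta>"
  unfolding \<beta>_def by (rule mmul_bound[where \<rho>=\<rho>]) (use assms Rb S Xb in auto)

lemma aux_abs: assumes "0 \<le> (s1::real)" "s1 \<le> N" "\<bar>s2\<bar> \<le> N" shows "\<bar>- (1/2) * s1 + s2\<bar> \<le> 3/2 * N"
proof -
  have "s2 \<le> N" "- s2 \<le> N" using assms(3) by auto
  then show ?thesis using assms(1,2) unfolding abs_le_iff by (intro conjI) linarith+
qed

lemma sumsq_bound: assumes "good x" shows "(\<Sum>ik\<in>idx n K. (a x ik)^2) \<le> real n * real K * \<beta>^2"
proof -
  have "(\<Sum>ik\<in>idx n K. (a x ik)^2) \<le> (\<Sum>ik\<in>idx n K. \<beta>^2)"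
  proof (intro sum_mono)
    fix ik assume "ik \<in> idx n K"
    then have "\<bar>a x ik\<bar> \<le> \<beta>" using a_bound assms by blast
    then show "(a x ik)^2 \<le> \<beta>^2" by (metis abs_ge_zero power2_abs power_mono)
  qed
  also have "\<dots> = real n * real K * \<beta>^2" by (simp add: card_idx)
  finally show ?thesis .
qed

lemma b_bound: assumes "good x" shows "\<bar>b x\<bar> \<le> B0"
proof -
  have s1: "0 \<le> (\<Sum>ik\<in>idx n K. (a x ik)^2)" by (simp add: sum_nonneg)
  have s2: "\<bar>\<Sum>ik\<in>idx n K. mmul K X R ik * a x ik\<bar> \<le> real n * real K * \<beta>^2"
  proof -
    have "\<bar>\<Sum>ik\<in>idx n K. mmul K X R ik * a x ik\<bar> \<le> (\<Sum>ik\<in>idx n K. \<beta> * \<beta>)"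
      by (rule order.trans[OF sum_abs sum_mono])
         (use a_bound[OF assms] aX_bound \<beta>0 in \<open>auto simp: abs_mult intro!: mult_mono\<close>)
    also have "\<dots> = real n * real K * \<beta>^2" by (simp add: card_idx power2_eq_square)
    finally show ?thesis .
  qed
  have "\<bar>b x\<bar> \<le> 3/2 * (real n * real K * \<beta>^2)"
    unfolding b_def by (rule aux_abs[OF s1 sumsq_bound[OF assms] s2])
  then show ?thesis by (simp add: B0_def)
qed

lemma t_bound: assumes "good x" shows "\<bar>t Z x\<bar> \<le> \<beta> * (\<Sum>ik\<in>idx n K. \<bar>Z ik\<bar>)"
proof -
  have "\<bar>t Z x\<bar> \<le> (\<Sum>ik\<in>idx n K. \<bar>Z ik\<bar> * \<beta>)"
    unfolding t_def
    by (rule order.trans[OF sum_abs sum_mono]) (use a_bound[OF assms] in \<open>auto simp: abs_mult intro!: mult_left_mono\<close>)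
  then show ?thesis by (simp add: sum_distrib_left mult.commute)
qed

lemma u_bound: assumes g: "good x" shows "\<bar>b x + t Z x\<bar> \<le> MZ Z"
  using b_bound[OF g] t_bound[OF g, of Z] abs_triangle_ineq[of "b x" "t Z x"] unfolding MZ_def by linarith

lemma pmP[measurable]: "p \<in> borel_measurable P"
  using pm by (simp add: measurable_cong_sets[OF sP refl])

lemma a_meas[measurable]: "(\<lambda>x. a x ik) \<in> borel_measurable (Mat n K)"
  unfolding a_def by measurable
lemma b_meas[measurable]: "b \<in> borel_measurable (Mat n K)"
  unfolding b_def by measurable
lemma t_meas[measurable]: "t Z \<in> borel_measurable (Mat n K)"
  unfolding t_def by measurable

lemma measP: "f \<in> borel_measurable (Mat n K) \<Longrightarrow> f \<in> borel_measurable P"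
  by (simp add: measurable_cong_sets[OF sP refl])

lemma G_eq: "G Z = (\<integral>x. p x * exp (b x + t Z x) \<partial>P)"
  unfolding G_def u_eq ..

lemma fZ_meas: "(\<lambda>x. p x * exp (b x + t Z x)) \<in> borel_measurable P"
  by (rule measP) measurable

lemma intZ: assumes "integrable P p" shows "integrable P (\<lambda>x. p x * exp (b x + t Z x))"
proof (rule Bochner_Integration.integrable_bound[OF _ fZ_meas])
  show "integrable P (\<lambda>x. exp (MZ Z) * p x)" using assms by simp
  show "AE x in P. norm (p x * exp (b x + t Z x)) \<le> norm (exp (MZ Z) * p x)"
    using aeP_good
  proof eventually_elim
    case (elim x)
    have "exp (b x + t Z x) \<le> exp (MZ Z)" using u_bound[OF elim, of Z] by simp
    then show ?case using p0[of x] by (simp add: abs_mult mult.commute mult_left_mono)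
  qed
qed

lemma int_back: assumes "integrable P (\<lambda>x. p x * exp (b x + t Z x))" shows "integrable P p"
proof (rule Bochner_Integration.integrable_bound[OF _ measP[OF pm]])
  show "integrable P (\<lambda>x. exp (MZ Z) * (p x * exp (b x + t Z x)))" using assms by simp
  show "AE x in P. norm (p x) \<le> norm (exp (MZ Z) * (p x * exp (b x + t Z x)))"
    using aeP_good
  proof eventually_elim
    case (elim x)
    have "- MZ Z \<le> b x + t Z x" using u_bound[OF elim, of Z] by simp
    then have "exp (- MZ Z) \<le> exp (b x + t Z x)" by simp
    then have "1 \<le> exp (MZ Z) * exp (b x + t Z x)" by (simp add: exp_minus field_simps)
    then have "p x * 1 \<le> p x * (exp (MZ Z) * exp (b x + t Z x))"
      using p0[of x] by (intro mult_left_mono) auto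
    then show ?case using p0[of x] by (simp add: abs_mult mult_ac)
  qed
qed

lemma A00: "0 \<le> A0" unfolding A0_def using p0 by simp

lemma degenerate: assumes "\<not> (integrable P p \<and> A0 > 0)" shows "Dv Z = 0"
proof (cases "integrable P p")
  case False
  then have "A0 = 0" unfolding A0_def by (rule not_integrable_integral_eq)
  moreover have "G Z = 0" unfolding G_eq using int_back False by (metis not_integrable_integral_eq)
  ultimately show ?thesis by (simp add: Dv_def)
next
  case True
  then have "A0 = 0" using assms A00 by simp
  then have ae0: "AE x in P. p x = 0" using True p0 unfolding A0_def
    by (subst (asm) integral_nonneg_eq_0_iff_AE) auto
  have "G Z = (\<integral>x. 0 \<partial>P)" unfolding G_eq
    by (rule integral_cong_AE) (use ae0 fZ_meas in \<open>auto elim!: eventually_mono\<close>)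
  then have "G Z = 0" by simp
  then show ?thesis using \<open>A0 = 0\<close> by (simp add: Dv_def)
qed

lemma G_bounds: assumes ip: "integrable P p"
  shows "A0 * exp (- MZ Z) \<le> G Z" "G Z \<le> A0 * exp (MZ Z)"
proof -
  have "A0 * exp (- MZ Z) = (\<integral>x. p x * exp (- MZ Z) \<partial>P)" unfolding A0_def by simp
  also have "\<dots> \<le> G Z" unfolding G_eq
  proof (rule integral_mono_AE[OF _ intZ[OF ip]])
    show "integrable P (\<lambda>x. p x * exp (- MZ Z))" using ip by simp
    show "AE x in P. p x * exp (- MZ Z) \<le> p x * exp (b x + t Z x)"
      using aeP_good
    proof eventually_elim
      case (elim x)
      have "- MZ Z \<le> b x + t Z x" using u_bound[OF elim, of Z] by simp
      then show ?case using p0[of x] by (intro mult_left_mono) auto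
    qed
  qed
  finally show "A0 * exp (- MZ Z) \<le> G Z" .
  have "G Z \<le> (\<integral>x. p x * exp (MZ Z) \<partial>P)" unfolding G_eq
  proof (rule integral_mono_AE[OF intZ[OF ip]])
    show "integrable P (\<lambda>x. p x * exp (MZ Z))" using ip by simp
    show "AE x in P. p x * exp (b x + t Z x) \<le> p x * exp (MZ Z)"
      using aeP_good
    proof eventually_elim
      case (elim x)
      have "b x + t Z x \<le> MZ Z" using u_bound[OF elim, of Z] by simp
      then show ?case using p0[of x] by (intro mult_left_mono) auto
    qed
  qed
  also have "\<dots> = A0 * exp (MZ Z)" unfolding A0_def by simp
  finally show "G Z \<le> A0 * exp (MZ Z)" .
qed

lemma Dv_bound: "\<bar>Dv Z\<bar> \<le> MZ Z / real n"
proof (cases "integrable P p \<and> A0 > 0")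
  case False
  then show ?thesis using degenerate MZ0 by simp
next
  case True
  then have ip: "integrable P p" and A: "A0 > 0" by auto
  have Gp: "0 < G Z" using G_bounds(1)[OF ip, of Z] A by (smt (verit) exp_gt_zero mult_pos_pos)
  have l1: "ln A0 - MZ Z \<le> ln (G Z)"
  proof -
    have "ln (A0 * exp (- MZ Z)) \<le> ln (G Z)" using G_bounds(1)[OF ip, of Z] A Gp by simp
    then show ?thesis using A by (simp add: ln_mult)
  qed
  have l2: "ln (G Z) \<le> ln A0 + MZ Z"
  proof -
    have "ln (G Z) \<le> ln (A0 * exp (MZ Z))" using G_bounds(2)[OF ip, of Z] A Gp by simp
    then show ?thesis using A by (simp add: ln_mult)
  qed
  have "Dv Z = (ln A0 - ln (G Z)) / real n" unfolding Dv_def by (simp add: diff_divide_distrib)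
  moreover have "\<bar>ln A0 - ln (G Z)\<bar> \<le> MZ Z" using l1 l2 by (simp add: abs_le_iff)
  ultimately show ?thesis using n by (simp add: divide_right_mono)
qed

abbreviation "E \<equiv> Gauss n K"

lemma joint_meas: "(\<lambda>(Z, x). p x * exp (b x + t Z x)) \<in> borel_measurable (E \<Otimes>\<^sub>M P)"
proof -
  have "(\<lambda>(Z, x). p x * exp (b x + t Z x)) \<in> borel_measurable (Mat n K \<Otimes>\<^sub>M Mat n K)"
    unfolding t_def by measurable
  then show ?thesis
    by (simp add: measurable_cong_sets[OF sets_pair_measure_cong[OF sets_Gauss sP] refl])
qed

lemma joint_meas_t: "(\<lambda>(Z, x). p x * exp (t Z x)) \<in> borel_measurable (E \<Otimes>\<^sub>M P)"
proof -
  have "(\<lambda>(Z, x). p x * exp (t Z x)) \<in> borel_measurable (Mat n K \<Otimes>\<^sub>M Mat n K)"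
    unfolding t_def by measurable
  then show ?thesis
    by (simp add: measurable_cong_sets[OF sets_pair_measure_cong[OF sets_Gauss sP] refl])
qed

lemma G_meas: "G \<in> borel_measurable E"
proof -
  have "(\<lambda>Z. \<integral>x. p x * exp (b x + t Z x) \<partial>P) \<in> borel_measurable E"
    using joint_meas by (intro P.borel_measurable_lebesgue_integral) simp
  then show ?thesis by (simp add: G_eq[abs_def])
qed

lemma Dv_meas: "Dv \<in> borel_measurable E"
  unfolding Dv_def[abs_def] using G_meas by measurable

lemma E_prob: "prob_space E" by (rule prob_space_Gauss)

interpretation E: prob_space E by (rule E_prob)

lemma absZ_int: "integrable E (\<lambda>Z. \<Sum>ik\<in>idx n K. \<bar>Z ik\<bar>)"
  using Gauss_coord(3) by (intro Bochner_Integration.integrable_sum) auto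

lemma absZ_int_le: "(\<integral>Z. (\<Sum>ik\<in>idx n K. \<bar>Z ik\<bar>) \<partial>E) \<le> real n * real K"
proof -
  have "(\<integral>Z. (\<Sum>ik\<in>idx n K. \<bar>Z ik\<bar>) \<partial>E) = (\<Sum>ik\<in>idx n K. \<integral>Z. \<bar>Z ik\<bar> \<partial>E)"
    using Gauss_coord(3) by (intro Bochner_Integration.integral_sum) auto
  also have "\<dots> \<le> (\<Sum>ik\<in>idx n K. 1)" using Gauss_coord(4) by (intro sum_mono) auto
  finally show ?thesis by (simp add: card_idx)
qed

lemma MZ_int: "integrable E (\<lambda>Z. MZ Z / real n)"
  unfolding MZ_def using absZ_int E_prob by (intro integrable_divide integrable_add) auto

lemma Dv_int: "integrable E Dv"
  by (rule Bochner_Integration.integrable_bound[OF MZ_int Dv_meas])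
     (use Dv_bound MZ0 n in \<open>auto intro!: AE_I2 simp: abs_of_nonneg\<close>)

lemma Dv_nn: "(\<integral>\<^sup>+Z. ennreal \<bar>Dv Z\<bar> \<partial>E) \<le> ennreal ((B0 + \<beta> * (real n * real K)) / real n)"
proof -
  have "(\<integral>\<^sup>+Z. ennreal \<bar>Dv Z\<bar> \<partial>E) \<le> (\<integral>\<^sup>+Z. ennreal (MZ Z / real n) \<partial>E)"
    by (intro nn_integral_mono ennreal_leI Dv_bound)
  also have "\<dots> = ennreal (\<integral>Z. MZ Z / real n \<partial>E)"
    using MZ_int MZ0 n by (intro nn_integral_eq_integral) auto
  also have "\<dots> \<le> ennreal ((B0 + \<beta> * (real n * real K)) / real n)"
  proof (intro ennreal_leI)
    have "(\<integral>Z. MZ Z / real n \<partial>E) = (B0 + \<beta> * (\<integral>Z. (\<Sum>ik\<in>idx n K. \<bar>Z ik\<bar>) \<partial>E)) / real n"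
      unfolding MZ_def using absZ_int by (simp add: E.prob_space)
    also have "\<dots> \<le> (B0 + \<beta> * (real n * real K)) / real n"
      using absZ_int_le \<beta>0 n by (intro divide_right_mono add_left_mono mult_left_mono) auto
    finally show "(\<integral>Z. MZ Z / real n \<partial>E) \<le> (B0 + \<beta> * (real n * real K)) / real n" .
  qed
  finally show ?thesis .
qed

lemma pf_int: assumes ip: "integrable P p" and fm: "f \<in> borel_measurable (Mat n K)"
  and fb: "\<And>x. good x \<Longrightarrow> \<bar>f x\<bar> \<le> c"
  shows "integrable P (\<lambda>x. p x * f x)"
proof (rule Bochner_Integration.integrable_bound[where f="\<lambda>x. \<bar>c\<bar> * p x"])
  show "integrable P (\<lambda>x. \<bar>c\<bar> * p x)" using ip by simp
  show "(\<lambda>x. p x * f x) \<in> borel_measurable P" by (rule measP) (use fm in measurable)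
  show "AE x in P. norm (p x * f x) \<le> norm (\<bar>c\<bar> * p x)"
    using aeP_good
  proof eventually_elim
    case (elim x)
    have "\<bar>f x\<bar> \<le> \<bar>c\<bar>" using fb[OF elim] by simp
    then have "p x * \<bar>f x\<bar> \<le> p x * \<bar>c\<bar>" using p0[of x] by (intro mult_left_mono) auto
    then show ?case using p0[of x] by (simp add: abs_mult mult.commute)
  qed
qed

definition "mm ik = (\<integral>x. p x * a x ik \<partial>P) / A0" for ik

lemma pa_int: "integrable P p \<Longrightarrow> ik \<in> idx n K \<Longrightarrow> integrable P (\<lambda>x. p x * a x ik)"
  by (rule pf_int[where c=\<beta>]) (auto intro: a_bound)

lemma pb_int: "integrable P p \<Longrightarrow> integrable P (\<lambda>x. p x * b x)"
  by (rule pf_int[where c=B0]) (auto intro: b_bound)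

lemma pu_int: "integrable P p \<Longrightarrow> integrable P (\<lambda>x. p x * (b x + t Z x))"
  by (rule pf_int[where c="MZ Z"]) (auto intro: u_bound)

lemma pu_eq: assumes ip: "integrable P p"
  shows "(\<integral>x. p x * (b x + t Z x) \<partial>P) = (\<integral>x. p x * b x \<partial>P) + (\<Sum>ik\<in>idx n K. Z ik * (\<integral>x. p x * a x ik \<partial>P))"
proof -
  have "(\<integral>x. p x * (b x + t Z x) \<partial>P) = (\<integral>x. p x * b x + (\<Sum>ik\<in>idx n K. Z ik * (p x * a x ik)) \<partial>P)"
    unfolding t_def by (simp add: distrib_left sum_distrib_left mult_ac)
  also have "\<dots> = (\<integral>x. p x * b x \<partial>P) + (\<integral>x. (\<Sum>ik\<in>idx n K. Z ik * (p x * a x ik)) \<partial>P)"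
    using pb_int[OF ip] pa_int[OF ip]
    by (intro Bochner_Integration.integral_add Bochner_Integration.integrable_sum integrable_mult_right) auto
  also have "(\<integral>x. (\<Sum>ik\<in>idx n K. Z ik * (p x * a x ik)) \<partial>P) = (\<Sum>ik\<in>idx n K. Z ik * (\<integral>x. p x * a x ik \<partial>P))"
    using pa_int[OF ip] by (subst Bochner_Integration.integral_sum) auto
  finally show ?thesis .
qed

lemma jensen: assumes ip: "integrable P p" and A: "A0 > 0"
  shows "A0 * exp ((\<integral>x. p x * (b x + t Z x) \<partial>P) / A0) \<le> G Z"
proof -
  define c where "c = (\<integral>x. p x * (b x + t Z x) \<partial>P) / A0"
  have pw: "exp c * (p x + p x * (b x + t Z x) - c * p x) \<le> p x * exp (b x + t Z x)" for x
  proof -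
    have "1 + (b x + t Z x - c) \<le> exp (b x + t Z x - c)" by (rule exp_ge_add_one_self)
    then have "exp c * (1 + (b x + t Z x - c)) \<le> exp c * exp (b x + t Z x - c)" by simp
    also have "\<dots> = exp (b x + t Z x)" by (simp add: exp_diff)
    finally have "p x * (exp c * (1 + (b x + t Z x - c))) \<le> p x * exp (b x + t Z x)"
      using p0[of x] by (intro mult_left_mono) auto
    then show ?thesis by (simp add: algebra_simps)
  qed
  have "(\<integral>x. exp c * (p x + p x * (b x + t Z x) - c * p x) \<partial>P)
      = exp c * (A0 + (\<integral>x. p x * (b x + t Z x) \<partial>P) - c * A0)"
    unfolding A0_def using ip pu_int[OF ip, of Z] by simp
  also have "\<dots> = exp c * A0" using A by (simp add: c_def)
  finally have e: "(\<integral>x. exp c * (p x + p x * (b x + t Z x) - c * p x) \<partial>P) = A0 * exp c" by simp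
  have "(\<integral>x. exp c * (p x + p x * (b x + t Z x) - c * p x) \<partial>P) \<le> G Z"
    unfolding G_eq
    by (rule integral_mono[OF _ intZ[OF ip] pw]) (use ip pu_int[OF ip, of Z] in simp)
  then have "A0 * exp c \<le> G Z" by (simp only: e)
  then show ?thesis unfolding c_def .
qed

lemma Dv_upper: assumes ip: "integrable P p" and A: "A0 > 0"
  shows "Dv Z \<le> (B0 - (\<Sum>ik\<in>idx n K. Z ik * mm ik)) / real n"
proof -
  define c where "c = (\<integral>x. p x * (b x + t Z x) \<partial>P) / A0"
  have G: "A0 * exp c \<le> G Z" using jensen[OF ip A] by (simp add: c_def)
  have pos: "0 < A0 * exp c" using A by simp
  have "ln (A0 * exp c) \<le> ln (G Z)" using G pos by (subst ln_le_cancel_iff) auto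
  then have l: "ln A0 + c \<le> ln (G Z)" using A by (simp add: ln_mult)
  have pbb: "- B0 * A0 \<le> (\<integral>x. p x * b x \<partial>P)"
  proof -
    have "(\<integral>x. p x * (- B0) \<partial>P) \<le> (\<integral>x. p x * b x \<partial>P)"
    proof (rule integral_mono_AE[OF _ pb_int[OF ip]])
      show "integrable P (\<lambda>x. p x * (- B0))" using ip by simp
      show "AE x in P. p x * (- B0) \<le> p x * b x"
        using aeP_good
      proof eventually_elim
        case (elim x)
        have "- B0 \<le> b x" using b_bound[OF elim] by (simp add: abs_le_iff)
        then show ?case using p0[of x] by (intro mult_left_mono) auto
      qed
    qed
    moreover have "(\<integral>x. p x * (- B0) \<partial>P) = - B0 * A0" unfolding A0_def by (metis integral_mult_left_zero mult.commute)
    ultimately show ?thesis by linarith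
  qed
  have c_eq: "c = (\<integral>x. p x * b x \<partial>P) / A0 + (\<Sum>ik\<in>idx n K. Z ik * mm ik)"
    unfolding c_def pu_eq[OF ip] mm_def add_divide_distrib sum_divide_distrib by simp
  have "(\<integral>x. p x * b x \<partial>P) / A0 \<ge> - B0" using pbb A by (simp add: field_simps)
  then have "- c \<le> B0 - (\<Sum>ik\<in>idx n K. Z ik * mm ik)" unfolding c_eq by simp
  moreover have "Dv Z = (ln A0 - ln (G Z)) / real n" unfolding Dv_def by (simp add: diff_divide_distrib)
  ultimately have "ln A0 - ln (G Z) \<le> B0 - (\<Sum>ik\<in>idx n K. Z ik * mm ik)" using l by linarith
  then have "(ln A0 - ln (G Z)) / real n \<le> (B0 - (\<Sum>ik\<in>idx n K. Z ik * mm ik)) / real n"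
    by (rule divide_right_mono) simp
  then show ?thesis using \<open>Dv Z = (ln A0 - ln (G Z)) / real n\<close> by simp
qed

lemma int_upper: "(\<integral>Z. Dv Z \<partial>E) \<le> B0 / real n"
proof (cases "integrable P p \<and> A0 > 0")
  case False
  then show ?thesis using degenerate B00 n by simp
next
  case True
  have iZ: "integrable E (\<lambda>Z. (B0 - (\<Sum>ik\<in>idx n K. Z ik * mm ik)) / real n)"
    using Gauss_coord(1) by (intro integrable_divide Bochner_Integration.integrable_diff
        Bochner_Integration.integrable_sum integrable_mult_left) auto
  have "(\<integral>Z. Dv Z \<partial>E) \<le> (\<integral>Z. (B0 - (\<Sum>ik\<in>idx n K. Z ik * mm ik)) / real n \<partial>E)"
    using True by (intro integral_mono[OF Dv_int iZ] Dv_upper) auto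
  also have "\<dots> = (B0 - (\<Sum>ik\<in>idx n K. (\<integral>Z. Z ik \<partial>E) * mm ik)) / real n"
    using Gauss_coord(1) by (simp add: Bochner_Integration.integral_sum Bochner_Integration.integrable_sum E.prob_space)
  also have "\<dots> = B0 / real n" using Gauss_coord(2) by simp
  finally show ?thesis .
qed

definition "W Z = (\<integral>x. p x * exp (t Z x) \<partial>P)" for Z
definition "J = (\<integral>x. p x * exp ((\<Sum>ik\<in>idx n K. (a x ik)^2) / 2) \<partial>P)"

lemma t_ub: "good x \<Longrightarrow> t Z x \<le> \<beta> * (\<Sum>ik\<in>idx n K. \<bar>Z ik\<bar>)"
  using t_bound[of x Z] by (simp add: abs_le_iff)
lemma t_lb: "good x \<Longrightarrow> - (\<beta> * (\<Sum>ik\<in>idx n K. \<bar>Z ik\<bar>)) \<le> t Z x"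
  using t_bound[of x Z] by (simp add: abs_le_iff)

lemma pt_int: "integrable P p \<Longrightarrow> integrable P (\<lambda>x. p x * exp (t Z x))"
  by (rule pf_int[where c="exp (\<beta> * (\<Sum>ik\<in>idx n K. \<bar>Z ik\<bar>))"]) (auto simp: t_ub)

lemma pJ_int: "integrable P p \<Longrightarrow> integrable P (\<lambda>x. p x * exp ((\<Sum>ik\<in>idx n K. (a x ik)^2) / 2))"
  by (rule pf_int[where c="exp (real n * real K * \<beta>^2 / 2)"]) (auto simp: sumsq_bound)

lemma W_pos: assumes ip: "integrable P p" and A: "A0 > 0" shows "0 < W Z"
proof -
  have "A0 * exp (- (\<beta> * (\<Sum>ik\<in>idx n K. \<bar>Z ik\<bar>))) = (\<integral>x. p x * exp (- (\<beta> * (\<Sum>ik\<in>idx n K. \<bar>Z ik\<bar>))) \<partial>P)"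
    unfolding A0_def by simp
  also have "\<dots> \<le> W Z" unfolding W_def
  proof (rule integral_mono_AE[OF _ pt_int[OF ip]])
    show "integrable P (\<lambda>x. p x * exp (- (\<beta> * (\<Sum>ik\<in>idx n K. \<bar>Z ik\<bar>))))" using ip by simp
    show "AE x in P. p x * exp (- (\<beta> * (\<Sum>ik\<in>idx n K. \<bar>Z ik\<bar>))) \<le> p x * exp (t Z x)"
      using aeP_good
    proof eventually_elim
      case (elim x) then show ?case using t_lb[OF elim, of Z] p0[of x] by (intro mult_left_mono) auto
    qed
  qed
  finally show ?thesis using A by (smt (verit) exp_gt_zero mult_pos_pos)
qed

lemma G_le_W: assumes ip: "integrable P p" shows "G Z \<le> exp B0 * W Z"
proof -
  have "G Z \<le> (\<integral>x. exp B0 * (p x * exp (t Z x)) \<partial>P)" unfolding G_eq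
  proof (rule integral_mono_AE[OF intZ[OF ip]])
    show "integrable P (\<lambda>x. exp B0 * (p x * exp (t Z x)))" using pt_int[OF ip] by simp
    show "AE x in P. p x * exp (b x + t Z x) \<le> exp B0 * (p x * exp (t Z x))"
      using aeP_good
    proof eventually_elim
      case (elim x)
      have "b x \<le> B0" using b_bound[OF elim] by (simp add: abs_le_iff)
      then have "exp (b x + t Z x) \<le> exp B0 * exp (t Z x)" by (simp add: exp_add[symmetric])
      then show ?case using p0[of x] by (simp add: mult_left_mono mult_ac)
    qed
  qed
  also have "\<dots> = exp B0 * W Z" unfolding W_def by simp
  finally show ?thesis .
qed

lemma W_meas: "W \<in> borel_measurable E"
proof -
  have "(\<lambda>Z. \<integral>x. p x * exp (t Z x) \<partial>P) \<in> borel_measurable E"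
    using joint_meas_t by (intro P.borel_measurable_lebesgue_integral) simp
  then show ?thesis by (simp add: W_def[abs_def])
qed

lemma W_nn: assumes ip: "integrable P p" shows "(\<integral>\<^sup>+Z. ennreal (W Z) \<partial>E) = ennreal J"
proof -
  interpret EP: pair_sigma_finite E P
    by (simp add: pair_sigma_finite_def prob_space_imp_sigma_finite E_prob P)
  have "(\<integral>\<^sup>+Z. ennreal (W Z) \<partial>E) = (\<integral>\<^sup>+Z. (\<integral>\<^sup>+x. ennreal (p x * exp (t Z x)) \<partial>P) \<partial>E)"
    unfolding W_def using pt_int[OF ip] p0
    by (intro nn_integral_cong nn_integral_eq_integral[symmetric]) auto
  also have "\<dots> = (\<integral>\<^sup>+x. (\<integral>\<^sup>+Z. ennreal (p x * exp (t Z x)) \<partial>E) \<partial>P)"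
  proof (rule EP.Fubini'[symmetric])
    show "(\<lambda>(Z, x). ennreal (p x * exp (t Z x))) \<in> borel_measurable (E \<Otimes>\<^sub>M P)"
      using measurable_compose[OF joint_meas_t measurable_ennreal] by (simp add: case_prod_unfold)
  qed
  also have "\<dots> = (\<integral>\<^sup>+x. ennreal (p x * exp ((\<Sum>ik\<in>idx n K. (a x ik)^2) / 2)) \<partial>P)"
  proof (intro nn_integral_cong)
    fix x
    have "(\<integral>\<^sup>+Z. ennreal (p x * exp (t Z x)) \<partial>E) = (\<integral>\<^sup>+Z. ennreal (p x) * ennreal (exp (\<Sum>ik\<in>idx n K. a x ik * Z ik)) \<partial>E)"
      using p0[of x] by (intro nn_integral_cong) (simp add: ennreal_mult t_def mult.commute)
    also have "\<dots> = ennreal (p x) * (\<integral>\<^sup>+Z. ennreal (exp (\<Sum>ik\<in>idx n K. a x ik * Z ik)) \<partial>E)"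
    proof (rule nn_integral_cmult)
      have "(\<lambda>Z. exp (\<Sum>ik\<in>idx n K. a x ik * Z ik)) \<in> borel_measurable (Mat n K)" by measurable
      then show "(\<lambda>Z. ennreal (exp (\<Sum>ik\<in>idx n K. a x ik * Z ik))) \<in> borel_measurable E"
        by (simp add: measurable_cong_sets[OF sets_Gauss refl])
    qed
    also have "\<dots> = ennreal (p x) * ennreal (exp (\<Sum>ik\<in>idx n K. (a x ik)^2 / 2))"
      by (simp only: mgf_Gauss)
    also have "\<dots> = ennreal (p x * exp ((\<Sum>ik\<in>idx n K. (a x ik)^2) / 2))"
      using p0[of x] by (simp add: ennreal_mult sum_divide_distrib)
    finally show "(\<integral>\<^sup>+Z. ennreal (p x * exp (t Z x)) \<partial>E) = ennreal (p x * exp ((\<Sum>ik\<in>idx n K. (a x ik)^2) / 2))" .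
  qed
  also have "\<dots> = ennreal J"
    unfolding J_def using pJ_int[OF ip] p0 by (intro nn_integral_eq_integral) auto
  finally show ?thesis .
qed

lemma W_int: assumes ip: "integrable P p" shows "integrable E W" "(\<integral>Z. W Z \<partial>E) = J"
proof -
  have W0: "\<And>Z. 0 \<le> W Z" unfolding W_def using p0 by simp
  show "integrable E W"
    by (rule integrableI_nn_integral_finite[OF W_meas _ W_nn[OF ip]]) (simp add: W0)
  have J0: "0 \<le> J" unfolding J_def using p0 by simp
  show "(\<integral>Z. W Z \<partial>E) = J"
    using W_nn[OF ip] W0 J0 by (subst integral_eq_nn_integral[OF W_meas]) auto
qed

lemma J_bounds: assumes ip: "integrable P p" shows "A0 \<le> J" "J \<le> A0 * exp (real n * real K * \<beta>^2 / 2)"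
proof -
  show "A0 \<le> J" unfolding A0_def J_def
  proof (rule integral_mono[OF ip pJ_int[OF ip]])
    fix x
    have "1 \<le> exp ((\<Sum>ik\<in>idx n K. (a x ik)^2) / 2)" by (simp add: sum_nonneg)
    then show "p x \<le> p x * exp ((\<Sum>ik\<in>idx n K. (a x ik)^2) / 2)"
      using p0[of x] mult_left_mono[of 1 _ "p x"] by simp
  qed
  have "J \<le> (\<integral>x. p x * exp (real n * real K * \<beta>^2 / 2) \<partial>P)" unfolding J_def
  proof (rule integral_mono_AE[OF pJ_int[OF ip]])
    show "integrable P (\<lambda>x. p x * exp (real n * real K * \<beta>^2 / 2))" using ip by simp
    show "AE x in P. p x * exp ((\<Sum>ik\<in>idx n K. (a x ik)^2) / 2) \<le> p x * exp (real n * real K * \<beta>^2 / 2)"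
      using aeP_good
    proof eventually_elim
      case (elim x) then show ?case using sumsq_bound[OF elim] p0[of x] by (intro mult_left_mono) auto
    qed
  qed
  also have "\<dots> = A0 * exp (real n * real K * \<beta>^2 / 2)" unfolding A0_def by simp
  finally show "J \<le> A0 * exp (real n * real K * \<beta>^2 / 2)" .
qed

lemma Dv_lower: assumes ip: "integrable P p" and A: "A0 > 0"
  shows "- (B0 + ln (J / A0) + (W Z / A0) / (J / A0) - 1) / real n \<le> Dv Z"
proof -
  define m where "m = J / A0"
  define V where "V = W Z / A0"
  have m1: "1 \<le> m" unfolding m_def using J_bounds(1)[OF ip] A by simp
  have Wp: "0 < W Z" by (rule W_pos[OF ip A])
  have Vp: "0 < V" unfolding V_def using Wp A by simp
  have Gp: "0 < G Z" using G_bounds(1)[OF ip, of Z] A by (smt (verit) exp_gt_zero mult_pos_pos)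
  have "ln (G Z) \<le> ln (exp B0 * W Z)" using G_le_W[OF ip, of Z] Gp by simp
  then have lG: "ln (G Z) \<le> B0 + ln (W Z)" using Wp by (simp add: ln_mult)
  have lW: "ln (W Z) = ln A0 + ln V" unfolding V_def using Wp A by (simp add: ln_div)
  have "ln (V / m) \<le> V / m - 1" using Vp m1 by (intro ln_le_minus_one) simp
  then have lV: "ln V \<le> ln m + V / m - 1" using Vp m1 by (simp add: ln_div)
  have "Dv Z = (ln A0 - ln (G Z)) / real n" unfolding Dv_def by (simp add: diff_divide_distrib)
  moreover have "- (B0 + ln m + V / m - 1) \<le> ln A0 - ln (G Z)" using lG lW lV by linarith
  ultimately show ?thesis unfolding m_def V_def using n by (simp add: divide_right_mono)
qed

lemma int_lower: "- (B0 / real n) - real K * \<beta>^2 / 2 \<le> (\<integral>Z. Dv Z \<partial>E)"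
proof (cases "integrable P p \<and> A0 > 0")
  case False
  then have "(\<integral>Z. Dv Z \<partial>E) = 0" using degenerate by simp
  moreover have "0 \<le> B0 / real n" "0 \<le> real K * \<beta>^2 / 2" using B00 by auto
  ultimately show ?thesis by linarith
next
  case True
  then have ip: "integrable P p" and A: "A0 > 0" by auto
  define m where "m = J / A0"
  have m1: "1 \<le> m" unfolding m_def using J_bounds(1)[OF ip] A by simp
  have mu: "m \<le> exp (real n * real K * \<beta>^2 / 2)"
    unfolding m_def using J_bounds(2)[OF ip] A by (simp add: divide_le_eq mult.commute)
  have iL: "integrable E (\<lambda>Z. - (B0 + ln m + (W Z / A0) / m - 1) / real n)"
    using W_int(1)[OF ip] by simp
  have "(\<integral>Z. - (B0 + ln m + (W Z / A0) / m - 1) / real n \<partial>E) \<le> (\<integral>Z. Dv Z \<partial>E)"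
    by (rule integral_mono[OF iL Dv_int]) (use Dv_lower[OF ip A] in \<open>simp add: m_def\<close>)
  moreover have "(\<integral>Z. - (B0 + ln m + (W Z / A0) / m - 1) / real n \<partial>E) = - (B0 + ln m) / real n"
  proof -
    have "(\<integral>Z. - (B0 + ln m + (W Z / A0) / m - 1) / real n \<partial>E)
        = - (B0 + ln m + ((\<integral>Z. W Z \<partial>E) / A0) / m - 1) / real n"
      using W_int(1)[OF ip] by (simp add: E.prob_space)
    also have "\<dots> = - (B0 + ln m) / real n" using W_int(2)[OF ip] A m1 by (simp add: m_def)
    finally show ?thesis .
  qed
  moreover have "ln m \<le> real n * real K * \<beta>^2 / 2"
    using mu m1 by (metis exp_gt_zero less_le_trans ln_exp ln_le_cancel_iff zero_less_one)
  ultimately show ?thesis using n by (simp add: field_simps) 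
qed

end

lemma bind_int_le:
  fixes f :: "_ \<Rightarrow> real"
  assumes M: "prob_space M" and N: "N \<in> measurable M (subprob_algebra K)" and c: "0 \<le> c"
    and ae: "AE x in M. (\<integral>y. f y \<partial>N x) \<le> c"
  shows "(\<integral>y. f y \<partial>bind M N) \<le> c"
proof (cases "integrable (bind M N) f")
  case True
  interpret prob_space M by (rule M)
  have ne: "space M \<noteq> {}" by (rule not_empty)
  have "(\<integral>y. f y \<partial>bind M N) = (\<integral>x. \<integral>y. f y \<partial>N x \<partial>M)" by (rule integral_bind_gen(2)[OF N ne True])
  also have "\<dots> \<le> (\<integral>x. c \<partial>M)"
    by (rule integral_mono_AE[OF integral_bind_gen(1)[OF N ne True] _ ae]) simp
  also have "\<dots> = c" by (simp add: prob_space)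
  finally show ?thesis .
next
  case False then show ?thesis using c by (simp add: not_integrable_integral_eq)
qed

lemma bind_int_ge:
  fixes f :: "_ \<Rightarrow> real"
  assumes M: "prob_space M" and N: "N \<in> measurable M (subprob_algebra K)" and c: "c \<le> 0"
    and ae: "AE x in M. c \<le> (\<integral>y. f y \<partial>N x)"
  shows "c \<le> (\<integral>y. f y \<partial>bind M N)"
proof -
  have "(\<integral>y. - f y \<partial>bind M N) \<le> - c"
    by (rule bind_int_le[OF M N]) (use c ae in auto)
  then show ?thesis by simp
qed

lemma bind_nn_le:
  assumes M: "prob_space M" and N: "N \<in> measurable M (subprob_algebra K)"
    and f: "f \<in> borel_measurable K"
    and ae: "AE x in M. (\<integral>\<^sup>+y. f y \<partial>N x) \<le> c"
  shows "(\<integral>\<^sup>+y. f y \<partial>bind M N) \<le> c"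
proof -
  interpret prob_space M by (rule M)
  have "(\<integral>\<^sup>+y. f y \<partial>bind M N) = (\<integral>\<^sup>+x. \<integral>\<^sup>+y. f y \<partial>N x \<partial>M)" by (rule nn_integral_bind[OF f N])
  also have "\<dots> \<le> (\<integral>\<^sup>+x. c \<partial>M)" by (rule nn_integral_mono_AE[OF ae])
  also have "\<dots> = c" by (simp add: emeasure_space_1)
  finally show ?thesis .
qed

lemma integral_kernel_meas:
  fixes f :: "'a \<Rightarrow> 'b \<Rightarrow> real"
  assumes f[measurable]: "(\<lambda>(x, y). f x y) \<in> borel_measurable (M \<Otimes>\<^sub>M N)"
    and L[measurable]: "L \<in> measurable M (subprob_algebra N)"
  shows "(\<lambda>x. \<integral>y. f x y \<partial>L x) \<in> borel_measurable M"
proof -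
  define g where "g x = (if (\<integral>\<^sup>+y. ennreal \<bar>f x y\<bar> \<partial>L x) < \<infinity>
     then enn2real (\<integral>\<^sup>+y. ennreal (f x y) \<partial>L x) - enn2real (\<integral>\<^sup>+y. ennreal (- f x y) \<partial>L x) else 0)" for x
  have m1: "(\<lambda>x. \<integral>\<^sup>+y. ennreal \<bar>f x y\<bar> \<partial>L x) \<in> borel_measurable M"
    by (rule nn_integral_measurable_subprob_algebra2[OF _ L]) measurable
  have m2: "(\<lambda>x. \<integral>\<^sup>+y. ennreal (f x y) \<partial>L x) \<in> borel_measurable M"
    by (rule nn_integral_measurable_subprob_algebra2[OF _ L]) measurable
  have m3: "(\<lambda>x. \<integral>\<^sup>+y. ennreal (- f x y) \<partial>L x) \<in> borel_measurable M"
    by (rule nn_integral_measurable_subprob_algebra2[OF _ L]) measurable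
  have gm: "g \<in> borel_measurable M" unfolding g_def using m1 m2 m3 by measurable
  have "g x = (\<integral>y. f x y \<partial>L x)" if x: "x \<in> space M" for x
  proof -
    have sx: "sets (L x) = sets N" by (rule sets_kernel[OF L x])
    have fx: "f x \<in> borel_measurable (L x)"
      by (subst measurable_cong_sets[OF sx refl]) (use x in measurable)
    show ?thesis
    proof (cases "(\<integral>\<^sup>+y. ennreal \<bar>f x y\<bar> \<partial>L x) < \<infinity>")
      case True
      then have "integrable (L x) (f x)" using fx by (simp add: integrable_iff_bounded)
      then show ?thesis using True unfolding g_def by (simp add: real_lebesgue_integral_def)
    next
      case False
      then have "\<not> integrable (L x) (f x)" by (simp add: integrable_iff_bounded)
      then show ?thesis using False unfolding g_def by (simp add: not_integrable_integral_eq)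
    qed
  qed
  then show ?thesis using gm by (subst measurable_cong[where g=g]) auto
qed

locale model =
  fixes n K :: nat and S :: real and Pt0 :: "'a measure" and Pto :: "'b measure"
    and P0 :: "'a \<Rightarrow> (nat \<times> nat \<Rightarrow> real) measure" and \<mu> :: "'c measure"
    and pout :: "(nat \<times> nat \<Rightarrow> real) \<Rightarrow> 'b \<Rightarrow> 'c \<Rightarrow> real"
  assumes n: "n \<ge> 1" and K: "K \<ge> 1" and S: "S > 0"
    and Pt0: "prob_space Pt0" and Pto: "prob_space Pto"
    and P0k: "P0 \<in> measurable Pt0 (prob_algebra (Mat n K))"
    and P0b: "\<And>t. t \<in> space Pt0 \<Longrightarrow> AE x in P0 t. \<forall>ik\<in>idx n K. \<bar>x ik\<bar> \<le> S"
    and \<mu>: "sigma_finite_measure \<mu>"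
    and poutm: "(\<lambda>(X, to, y). pout X to y) \<in> borel_measurable (Mat n K \<Otimes>\<^sub>M Pto \<Otimes>\<^sub>M \<mu>)"
    and pout0: "\<And>X to y. 0 \<le> pout X to y"
    and poutn: "\<And>X to. X \<in> space (Mat n K) \<Longrightarrow> to \<in> space Pto \<Longrightarrow>
        (\<integral>\<^sup>+ y. ennreal (pout X to y) \<partial>\<mu>) = 1"
begin

interpretation Pt0: prob_space Pt0 by (rule Pt0)
interpretation Pto: prob_space Pto by (rule Pto)
interpretation \<mu>: sigma_finite_measure \<mu> by (rule \<mu>)

abbreviation "\<Omega> \<equiv> Pt0 \<Otimes>\<^sub>M Pto \<Otimes>\<^sub>M Mat n K \<Otimes>\<^sub>M \<mu> \<Otimes>\<^sub>M Mat n K"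
definition "dens X to = density \<mu> (\<lambda>y. ennreal (pout X to y))" for X to

lemma P0k'[measurable]: "P0 \<in> measurable Pt0 (subprob_algebra (Mat n K))"
  by (rule measurable_prob_algebraD[OF P0k])

lemma pout_meas[measurable (raw)]:
  assumes "f \<in> measurable M (Mat n K)" "g \<in> measurable M Pto" "h \<in> measurable M \<mu>"
  shows "(\<lambda>x. pout (f x) (g x) (h x)) \<in> borel_measurable M"
  using measurable_compose[OF measurable_Pair[OF assms(1) measurable_Pair[OF assms(2,3)]] poutm] by simp

lemma prob_dens: assumes X: "X \<in> space (Mat n K)" and to: "to \<in> space Pto" shows "prob_space (dens X to)"
proof (rule prob_spaceI)
  have m: "(\<lambda>y. ennreal (pout X to y)) \<in> borel_measurable \<mu>" using X to by measurable
  have "emeasure (dens X to) (space (dens X to)) = (\<integral>\<^sup>+y. ennreal (pout X to y) * indicator (space \<mu>) y \<partial>\<mu>)"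
    unfolding dens_def by (simp add: emeasure_density m)
  also have "\<dots> = (\<integral>\<^sup>+y. ennreal (pout X to y) \<partial>\<mu>)" by (intro nn_integral_cong) simp
  also have "\<dots> = 1" using poutn[OF X to] .
  finally show "emeasure (dens X to) (space (dens X to)) = 1" .
qed

lemma sets_dens[simp]: "sets (dens X to) = sets \<mu>" unfolding dens_def by simp
lemma space_dens[simp]: "space (dens X to) = space \<mu>" unfolding dens_def by simp

lemma dens_meas[measurable (raw)]:
  assumes f[measurable]: "f \<in> measurable M (Mat n K)" and g[measurable]: "g \<in> measurable M Pto"
  shows "(\<lambda>x. dens (f x) (g x)) \<in> measurable M (subprob_algebra \<mu>)"
proof (rule measurable_subprob_algebra)
  fix a assume a: "a \<in> space M"
  show "subprob_space (dens (f a) (g a))"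
    using prob_dens[OF measurable_space[OF f a] measurable_space[OF g a]]
    by (rule prob_space_imp_subprob_space)
  show "sets (dens (f a) (g a)) = sets \<mu>" by simp
next
  fix A assume A[measurable]: "A \<in> sets \<mu>"
  have "(\<lambda>a. \<integral>\<^sup>+y. ennreal (pout (f a) (g a) y) * indicator A y \<partial>\<mu>) \<in> borel_measurable M"
    by measurable
  then show "(\<lambda>a. emeasure (dens (f a) (g a)) A) \<in> borel_measurable M"
    unfolding dens_def by (subst measurable_cong[where g="\<lambda>a. \<integral>\<^sup>+y. ennreal (pout (f a) (g a) y) * indicator A y \<partial>\<mu>"])
      (auto simp: emeasure_density)
qed

lemma Gauss_const[measurable]: "(\<lambda>x. Gauss n K) \<in> measurable M (subprob_algebra (Gauss n K))"
  by (rule measurable_const) (simp add: space_subprob_algebra prob_space_imp_subprob_space prob_space_Gauss)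

lemma Pto_const[measurable]: "(\<lambda>x. Pto) \<in> measurable M (subprob_algebra Pto)"
  by (rule measurable_const) (simp add: space_subprob_algebra prob_space_imp_subprob_space Pto)

lemma id_Gauss[measurable]: "(\<lambda>x. x) \<in> measurable (Gauss n K) (Mat n K)"
  by (rule measurable_ident_sets) (rule sets_Gauss)

definition "k5 t0 to X y = bind (Gauss n K) (\<lambda>Z. return \<Omega> (t0, to, X, y, Z))" for t0 to X y
definition "k4 t0 to X = bind (dens X to) (\<lambda>y. k5 t0 to X y)" for t0 to X
definition "k3 t0 to = bind (P0 t0) (\<lambda>X. k4 t0 to X)" for t0 to
definition "k2 t0 = bind Pto (\<lambda>to. k3 t0 to)" for t0

lemma law_eq: "law Pt0 Pto P0 \<mu> pout n K = bind Pt0 k2"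
  unfolding law_def k2_def k3_def k4_def k5_def dens_def ..

lemma k5_meas[measurable (raw)]:
  assumes [measurable]: "f1 \<in> measurable M Pt0" "f2 \<in> measurable M Pto" "f3 \<in> measurable M (Mat n K)" "f4 \<in> measurable M \<mu>"
  shows "(\<lambda>x. k5 (f1 x) (f2 x) (f3 x) (f4 x)) \<in> measurable M (subprob_algebra \<Omega>)"
  unfolding k5_def by measurable

lemma k4_meas[measurable (raw)]:
  assumes [measurable]: "f1 \<in> measurable M Pt0" "f2 \<in> measurable M Pto" "f3 \<in> measurable M (Mat n K)"
  shows "(\<lambda>x. k4 (f1 x) (f2 x) (f3 x)) \<in> measurable M (subprob_algebra \<Omega>)"
  unfolding k4_def by measurable

lemma k3_meas[measurable (raw)]:
  assumes [measurable]: "f1 \<in> measurable M Pt0" "f2 \<in> measurable M Pto"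
  shows "(\<lambda>x. k3 (f1 x) (f2 x)) \<in> measurable M (subprob_algebra \<Omega>)"
  unfolding k3_def by measurable

lemma k2_meas: "k2 \<in> measurable Pt0 (subprob_algebra \<Omega>)"
  unfolding k2_def by measurable

lemma k5_sec: "t0 \<in> space Pt0 \<Longrightarrow> to \<in> space Pto \<Longrightarrow> X \<in> space (Mat n K) \<Longrightarrow>
  (\<lambda>y. k5 t0 to X y) \<in> measurable (dens X to) (subprob_algebra \<Omega>)"
  by (simp add: measurable_cong_sets[OF sets_dens refl])

lemma k4_sec: "t0 \<in> space Pt0 \<Longrightarrow> to \<in> space Pto \<Longrightarrow>
  (\<lambda>X. k4 t0 to X) \<in> measurable (P0 t0) (subprob_algebra \<Omega>)"
  by (simp add: measurable_cong_sets[OF sets_kernel[OF P0k'] refl])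

lemma k3_sec: "t0 \<in> space Pt0 \<Longrightarrow> (\<lambda>to. k3 t0 to) \<in> measurable Pto (subprob_algebra \<Omega>)"
  by simp

end

context model
begin

lemma F0_alt: "F0 P0 pout n = (\<lambda>\<omega>. - (1 / real n) * ln (\<integral>x. pout x (fst (snd \<omega>)) (fst (snd (snd (snd \<omega>)))) \<partial>P0 (fst \<omega>)))"
  by (simp add: F0_def fun_eq_iff split: prod.split)

lemma Fpert_alt: "Fpert P0 pout n K L = (\<lambda>\<omega>. - (1 / real n) * ln (\<integral>x. pout x (fst (snd \<omega>)) (fst (snd (snd (snd \<omega>))))
   * exp (- Ham n K L x (\<lambda>ik. mmul K (fst (snd (snd \<omega>))) (sqrtm K L) ik + snd (snd (snd (snd \<omega>))) ik)) \<partial>P0 (fst \<omega>)))"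
  by (simp add: Fpert_def fun_eq_iff split: prod.split)

lemma F0_meas: "F0 P0 pout n \<in> borel_measurable \<Omega>"
proof -
  have "(\<lambda>\<omega>. \<integral>x. pout x (fst (snd \<omega>)) (fst (snd (snd (snd \<omega>)))) \<partial>P0 (fst \<omega>)) \<in> borel_measurable \<Omega>"
    by (rule integral_kernel_meas[where N="Mat n K"]) measurable
  then show ?thesis unfolding F0_alt by measurable
qed

lemma Fpert_meas: "Fpert P0 pout n K L \<in> borel_measurable \<Omega>"
proof -
  have "(\<lambda>\<omega>. \<integral>x. pout x (fst (snd \<omega>)) (fst (snd (snd (snd \<omega>))))
   * exp (- Ham n K L x (\<lambda>ik. mmul K (fst (snd (snd \<omega>))) (sqrtm K L) ik + snd (snd (snd (snd \<omega>))) ik)) \<partial>P0 (fst \<omega>))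
    \<in> borel_measurable \<Omega>"
    by (rule integral_kernel_meas[where N="Mat n K"]) (unfold Ham_def Let_def mmul_def, measurable)
  then show ?thesis unfolding Fpert_alt by measurable
qed

lemma k5_distr:
  assumes "t0 \<in> space Pt0" "to \<in> space Pto" "X \<in> space (Mat n K)" "y \<in> space \<mu>"
  shows "k5 t0 to X y = distr (Gauss n K) \<Omega> (\<lambda>Z. (t0, to, X, y, Z))"
  unfolding k5_def
proof (rule bind_return_distr')
  show "space (Gauss n K) \<noteq> {}" using prob_space_Gauss by (rule prob_space.not_empty)
  show "(\<lambda>Z. (t0, to, X, y, Z)) \<in> measurable (Gauss n K) \<Omega>" using assms by measurable
qed

lemma P0_prob: "t0 \<in> space Pt0 \<Longrightarrow> prob_space (P0 t0)"
  using measurable_space[OF P0k] by (simp add: space_prob_algebra)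

lemma bounded_space_AE: "t0 \<in> space Pt0 \<Longrightarrow> AE X in P0 t0. X \<in> space (Mat n K) \<and> (\<forall>ik\<in>idx n K. \<bar>X ik\<bar> \<le> S)"
  using P0b[of t0] AE_space[of "P0 t0"] sets_eq_imp_space_eq[OF sets_kernel[OF P0k']]
  by (auto elim: eventually_mono)

lemma lift_le:
  fixes f :: "_ \<Rightarrow> real"
  assumes f[measurable]: "f \<in> borel_measurable \<Omega>" and c: "0 \<le> c"
    and H: "\<And>t0 to X y. t0 \<in> space Pt0 \<Longrightarrow> to \<in> space Pto \<Longrightarrow> X \<in> space (Mat n K) \<Longrightarrow>
       (\<forall>ik\<in>idx n K. \<bar>X ik\<bar> \<le> S) \<Longrightarrow> y \<in> space \<mu> \<Longrightarrow> (\<integral>Z. f (t0, to, X, y, Z) \<partial>Gauss n K) \<le> c"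
  shows "(\<integral>\<omega>. f \<omega> \<partial>law Pt0 Pto P0 \<mu> pout n K) \<le> c"
  unfolding law_eq
proof (rule bind_int_le[OF Pt0 k2_meas c], rule AE_I2)
  fix t0 assume t0: "t0 \<in> space Pt0"
  show "(\<integral>\<omega>. f \<omega> \<partial>k2 t0) \<le> c" unfolding k2_def
  proof (rule bind_int_le[OF Pto k3_sec[OF t0] c], rule AE_I2)
    fix to assume to: "to \<in> space Pto"
    show "(\<integral>\<omega>. f \<omega> \<partial>k3 t0 to) \<le> c" unfolding k3_def
    proof (rule bind_int_le[OF P0_prob[OF t0] k4_sec[OF t0 to] c])
      show "AE X in P0 t0. (\<integral>\<omega>. f \<omega> \<partial>k4 t0 to X) \<le> c"
        using bounded_space_AE[OF t0]
      proof eventually_elim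
        case (elim X)
        then have X: "X \<in> space (Mat n K)" and Xb: "\<forall>ik\<in>idx n K. \<bar>X ik\<bar> \<le> S" by auto
        show ?case unfolding k4_def
        proof (rule bind_int_le[OF prob_dens[OF X to] k5_sec[OF t0 to X] c], rule AE_I2)
          fix y assume "y \<in> space (dens X to)"
          then have y: "y \<in> space \<mu>" by simp
          have "(\<integral>\<omega>. f \<omega> \<partial>k5 t0 to X y) = (\<integral>Z. f (t0, to, X, y, Z) \<partial>Gauss n K)"
            unfolding k5_distr[OF t0 to X y] by (rule integral_distr) (use t0 to X y in measurable)
          then show "(\<integral>\<omega>. f \<omega> \<partial>k5 t0 to X y) \<le> c" using H[OF t0 to X Xb y] by simp
        qed
      qed
    qed
  qed
qed

lemma lift_ge:
  fixes f :: "_ \<Rightarrow> real"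
  assumes f[measurable]: "f \<in> borel_measurable \<Omega>" and c: "c \<le> 0"
    and H: "\<And>t0 to X y. t0 \<in> space Pt0 \<Longrightarrow> to \<in> space Pto \<Longrightarrow> X \<in> space (Mat n K) \<Longrightarrow>
       (\<forall>ik\<in>idx n K. \<bar>X ik\<bar> \<le> S) \<Longrightarrow> y \<in> space \<mu> \<Longrightarrow> c \<le> (\<integral>Z. f (t0, to, X, y, Z) \<partial>Gauss n K)"
  shows "c \<le> (\<integral>\<omega>. f \<omega> \<partial>law Pt0 Pto P0 \<mu> pout n K)"
proof -
  have "(\<integral>\<omega>. - f \<omega> \<partial>law Pt0 Pto P0 \<mu> pout n K) \<le> - c"
    by (rule lift_le) (use c H in auto)
  then show ?thesis by simp
qed

lemma lift_nn:
  assumes f[measurable]: "f \<in> borel_measurable \<Omega>"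
    and H: "\<And>t0 to X y. t0 \<in> space Pt0 \<Longrightarrow> to \<in> space Pto \<Longrightarrow> X \<in> space (Mat n K) \<Longrightarrow>
       (\<forall>ik\<in>idx n K. \<bar>X ik\<bar> \<le> S) \<Longrightarrow> y \<in> space \<mu> \<Longrightarrow> (\<integral>\<^sup>+Z. f (t0, to, X, y, Z) \<partial>Gauss n K) \<le> c"
  shows "(\<integral>\<^sup>+\<omega>. f \<omega> \<partial>law Pt0 Pto P0 \<mu> pout n K) \<le> c"
  unfolding law_eq
proof (rule bind_nn_le[OF Pt0 k2_meas f], rule AE_I2)
  fix t0 assume t0: "t0 \<in> space Pt0"
  show "(\<integral>\<^sup>+\<omega>. f \<omega> \<partial>k2 t0) \<le> c" unfolding k2_def
  proof (rule bind_nn_le[OF Pto k3_sec[OF t0] f], rule AE_I2)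
    fix to assume to: "to \<in> space Pto"
    show "(\<integral>\<^sup>+\<omega>. f \<omega> \<partial>k3 t0 to) \<le> c" unfolding k3_def
    proof (rule bind_nn_le[OF P0_prob[OF t0] k4_sec[OF t0 to] f])
      show "AE X in P0 t0. (\<integral>\<^sup>+\<omega>. f \<omega> \<partial>k4 t0 to X) \<le> c"
        using bounded_space_AE[OF t0]
      proof eventually_elim
        case (elim X)
        then have X: "X \<in> space (Mat n K)" and Xb: "\<forall>ik\<in>idx n K. \<bar>X ik\<bar> \<le> S" by auto
        show ?case unfolding k4_def
        proof (rule bind_nn_le[OF prob_dens[OF X to] k5_sec[OF t0 to X] f], rule AE_I2)
          fix y assume "y \<in> space (dens X to)"
          then have y: "y \<in> space \<mu>" by simp
          have "(\<integral>\<^sup>+\<omega>. f \<omega> \<partial>k5 t0 to X y) = (\<integral>\<^sup>+Z. f (t0, to, X, y, Z) \<partial>Gauss n K)"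
          proof -
            have T: "(\<lambda>Z. (t0, to, X, y, Z)) \<in> measurable (Gauss n K) \<Omega>" using t0 to X y by measurable
            have fd: "f \<in> borel_measurable (distr (Gauss n K) \<Omega> (\<lambda>Z. (t0, to, X, y, Z)))"
              by (simp add: measurable_cong_sets[OF sets_distr refl])
            show ?thesis unfolding k5_distr[OF t0 to X y] by (rule nn_integral_distr[OF T fd])
          qed
          then show "(\<integral>\<^sup>+\<omega>. f \<omega> \<partial>k5 t0 to X y) \<le> c" using H[OF t0 to X Xb y] by simp
        qed
      qed
    qed
  qed
qed

lemma sets_law: "sets (law Pt0 Pto P0 \<mu> pout n K) = sets \<Omega>"
  unfolding law_eq by (rule sets_bind[OF sets_kernel[OF k2_meas] prob_space.not_empty[OF Pt0]])

end

context model
begin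

lemma level5:
  assumes t0: "t0 \<in> space Pt0" and to: "to \<in> space Pto" and X: "X \<in> space (Mat n K)"
    and Xb: "\<forall>ik\<in>idx n K. \<bar>X ik\<bar> \<le> S" and y: "y \<in> space \<mu>"
    and \<rho>: "0 \<le> \<rho>" and Rb: "\<And>i j. \<bar>sqrtm K L (i,j)\<bar> \<le> \<rho>"
  defines "D \<equiv> \<lambda>\<omega>. Fpert P0 pout n K L \<omega> - F0 P0 pout n \<omega>"
  defines "\<beta> \<equiv> real K * S * \<rho>"
  shows "(\<integral>\<^sup>+Z. ennreal (norm (D (t0, to, X, y, Z))) \<partial>Gauss n K) \<le> ennreal (3/2 * real K * \<beta>^2 + \<beta> * real K)"
    "(\<integral>Z. D (t0, to, X, y, Z) \<partial>Gauss n K) \<le> 3/2 * real K * \<beta>^2"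
    "- (3/2 * real K * \<beta>^2) - real K * \<beta>^2 / 2 \<le> (\<integral>Z. D (t0, to, X, y, Z) \<partial>Gauss n K)"
proof -
  have pm: "(\<lambda>x. pout x to y) \<in> borel_measurable (Mat n K)" using to y by measurable
  have ci: "core n K S \<rho> L (P0 t0) (\<lambda>x. pout x to y) X"
    unfolding core_def using n S \<rho> Rb P0_prob[OF t0] sets_kernel[OF P0k' t0] P0b[OF t0] pm pout0 Xb by auto
  interpret C: core n K S \<rho> L "P0 t0" "\<lambda>x. pout x to y" X by (rule ci)
  have eqD: "D (t0, to, X, y, Z) = C.Dv Z" for Z
    unfolding D_def C.Dv_def C.G_def C.A0_def C.Y_def by (simp add: Fpert_def F0_def)
  have B: "C.B0 / real n = 3/2 * real K * \<beta>^2" using n unfolding C.B0_def C.\<beta>_def \<beta>_def by simp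
  have "(\<integral>\<^sup>+Z. ennreal (norm (D (t0, to, X, y, Z))) \<partial>Gauss n K) = (\<integral>\<^sup>+Z. ennreal \<bar>C.Dv Z\<bar> \<partial>Gauss n K)"
    by (simp add: eqD)
  also have "\<dots> \<le> ennreal ((C.B0 + C.\<beta> * (real n * real K)) / real n)" by (rule C.Dv_nn)
  also have "(C.B0 + C.\<beta> * (real n * real K)) / real n = 3/2 * real K * \<beta>^2 + \<beta> * real K"
    using n unfolding C.B0_def C.\<beta>_def \<beta>_def by (simp add: field_simps)
  finally show "(\<integral>\<^sup>+Z. ennreal (norm (D (t0, to, X, y, Z))) \<partial>Gauss n K) \<le> ennreal (3/2 * real K * \<beta>^2 + \<beta> * real K)" .
  show "(\<integral>Z. D (t0, to, X, y, Z) \<partial>Gauss n K) \<le> 3/2 * real K * \<beta>^2"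
    using C.int_upper B by (simp add: eqD)
  show "- (3/2 * real K * \<beta>^2) - real K * \<beta>^2 / 2 \<le> (\<integral>Z. D (t0, to, X, y, Z) \<partial>Gauss n K)"
    using C.int_lower B unfolding C.\<beta>_def \<beta>_def by (simp add: eqD)
qed

lemma main_n:
  assumes L: "L \<in> DnK s K" and s: "0 < s"
    and F0i: "integrable (law Pt0 Pto P0 \<mu> pout n K) (F0 P0 pout n)"
  shows "\<bar>(\<integral>\<omega>. F0 P0 pout n \<omega> \<partial>law Pt0 Pto P0 \<mu> pout n K)
          - (\<integral>\<omega>. Fpert P0 pout n K L \<omega> \<partial>law Pt0 Pto P0 \<mu> pout n K)\<bar>
         \<le> 2 * real K ^ 3 * S^2 * (2 * real K + 1) * s"
proof -
  let ?M = "law Pt0 Pto P0 \<mu> pout n K"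
  define \<rho> where "\<rho> = sqrt (s * (2 * real K + 1))"
  have \<rho>0: "0 \<le> \<rho>" unfolding \<rho>_def using s by simp
  have Rb: "\<And>i j. \<bar>sqrtm K L (i,j)\<bar> \<le> \<rho>" unfolding \<rho>_def by (rule sqrtm_bound[OF K L s])
  define \<beta> where "\<beta> = real K * S * \<rho>"
  define D where "D = (\<lambda>\<omega>. Fpert P0 pout n K L \<omega> - F0 P0 pout n \<omega>)"
  have Dm: "D \<in> borel_measurable \<Omega>" unfolding D_def using F0_meas Fpert_meas by measurable
  have DmM: "D \<in> borel_measurable ?M" using Dm by (simp add: measurable_cong_sets[OF sets_law refl])
  have nnD: "(\<integral>\<^sup>+\<omega>. ennreal (norm (D \<omega>)) \<partial>?M) \<le> ennreal (3/2 * real K * \<beta>^2 + \<beta> * real K)"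
    by (rule lift_nn) (use Dm level5(1)[OF _ _ _ _ _ \<rho>0 Rb] in \<open>auto simp: D_def \<beta>_def\<close>)
  have Di: "integrable ?M D"
    unfolding integrable_iff_bounded using DmM le_less_trans[OF nnD ennreal_less_top] by auto
  have Fi: "integrable ?M (Fpert P0 pout n K L)"
  proof -
    have "integrable ?M (\<lambda>\<omega>. F0 P0 pout n \<omega> + D \<omega>)" using F0i Di by simp
    then show ?thesis unfolding D_def by simp
  qed
  have eq: "(\<integral>\<omega>. F0 P0 pout n \<omega> \<partial>?M) - (\<integral>\<omega>. Fpert P0 pout n K L \<omega> \<partial>?M) = - (\<integral>\<omega>. D \<omega> \<partial>?M)"
    unfolding D_def using F0i Fi by simp
  have up: "(\<integral>\<omega>. D \<omega> \<partial>?M) \<le> 3/2 * real K * \<beta>^2"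
    by (rule lift_le[OF Dm]) (use level5(2)[OF _ _ _ _ _ \<rho>0 Rb] in \<open>auto simp: D_def \<beta>_def\<close>)
  have lo: "- (3/2 * real K * \<beta>^2) - real K * \<beta>^2 / 2 \<le> (\<integral>\<omega>. D \<omega> \<partial>?M)"
    by (rule lift_ge[OF Dm]) (use level5(3)[OF _ _ _ _ _ \<rho>0 Rb] in \<open>auto simp: D_def \<beta>_def\<close>)
  have "\<bar>\<integral>\<omega>. D \<omega> \<partial>?M\<bar> \<le> 2 * real K * \<beta>^2" using up lo by (simp add: abs_le_iff)
  also have "2 * real K * \<beta>^2 = 2 * real K ^ 3 * S^2 * (2 * real K + 1) * s"
    unfolding \<beta>_def \<rho>_def using s by (simp add: power2_eq_square power3_eq_cube algebra_simps)
  finally show ?thesis unfolding eq by simp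
qed

end

theorem lemma1:
  fixes K :: nat and S :: real and s :: "nat \<Rightarrow> real"
    and Pt0 :: "nat \<Rightarrow> 'a measure" and Pto :: "nat \<Rightarrow> 'b measure"
    and P0 :: "nat \<Rightarrow> 'a \<Rightarrow> (nat \<times> nat \<Rightarrow> real) measure"
    and \<mu> :: "nat \<Rightarrow> 'c measure"
    and pout :: "nat \<Rightarrow> (nat \<times> nat \<Rightarrow> real) \<Rightarrow> 'b \<Rightarrow> 'c \<Rightarrow> real"
  assumes K: "K \<ge> 1" and S: "S > 0"
    and s_pos: "\<And>n. s n > 0" and s_lim: "s \<longlonglongrightarrow> 0"
    and Pt0: "\<And>n. n \<ge> 1 \<Longrightarrow> prob_space (Pt0 n)"
    and Pto: "\<And>n. n \<ge> 1 \<Longrightarrow> prob_space (Pto n)"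
    and P0_kernel: "\<And>n. n \<ge> 1 \<Longrightarrow> P0 n \<in> measurable (Pt0 n) (prob_algebra (Mat n K))"
    and P0_bounded: "\<And>n t. n \<ge> 1 \<Longrightarrow> t \<in> space (Pt0 n) \<Longrightarrow>
        AE x in P0 n t. \<forall>ik\<in>idx n K. \<bar>x ik\<bar> \<le> S"
    and \<mu>: "\<And>n. n \<ge> 1 \<Longrightarrow> sigma_finite_measure (\<mu> n)"
    and pout_meas: "\<And>n. n \<ge> 1 \<Longrightarrow>
        (\<lambda>(X, to, y). pout n X to y) \<in> borel_measurable (Mat n K \<Otimes>\<^sub>M Pto n \<Otimes>\<^sub>M \<mu> n)"
    and pout_nonneg: "\<And>n X to y. n \<ge> 1 \<Longrightarrow> pout n X to y \<ge> 0"
    and pout_normalized: "\<And>n X to. n \<ge> 1 \<Longrightarrow> X \<in> space (Mat n K) \<Longrightarrow> to \<in> space (Pto n) \<Longrightarrow>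
        (\<integral>\<^sup>+ y. ennreal (pout n X to y) \<partial>(\<mu> n)) = 1"
    and F0_finite: "\<And>n. n \<ge> 1 \<Longrightarrow>
        integrable (law (Pt0 n) (Pto n) (P0 n) (\<mu> n) (pout n) n K) (F0 (P0 n) (pout n) n)"
  shows "(\<exists>C. \<forall>n\<ge>1. \<forall>L\<in>DnK (s n) K.
            \<bar>(\<integral>\<omega>. F0 (P0 n) (pout n) n \<omega> \<partial>(law (Pt0 n) (Pto n) (P0 n) (\<mu> n) (pout n) n K))
             - (\<integral>\<omega>. Fpert (P0 n) (pout n) n K L \<omega> \<partial>(law (Pt0 n) (Pto n) (P0 n) (\<mu> n) (pout n) n K))\<bar>
            \<le> C * s n)
       \<and> (\<forall>Ls :: nat \<Rightarrow> (nat \<times> nat \<Rightarrow> real). \<forall>l :: real. (\<forall>n. Ls n \<in> DnK (s n) K) \<longrightarrow>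
            ((\<lambda>n. \<integral>\<omega>. F0 (P0 n) (pout n) n \<omega> \<partial>(law (Pt0 n) (Pto n) (P0 n) (\<mu> n) (pout n) n K))
               \<longlonglongrightarrow> l
             \<longleftrightarrow> (\<lambda>n. \<integral>\<omega>. Fpert (P0 n) (pout n) n K (Ls n) \<omega> \<partial>(law (Pt0 n) (Pto n) (P0 n) (\<mu> n) (pout n) n K))
               \<longlonglongrightarrow> l))"
proof -
  define C where "C = 2 * real K ^ 3 * S^2 * (2 * real K + 1)"
  let ?a = "\<lambda>n. \<integral>\<omega>. F0 (P0 n) (pout n) n \<omega> \<partial>(law (Pt0 n) (Pto n) (P0 n) (\<mu> n) (pout n) n K)"
  let ?b = "\<lambda>n L. \<integral>\<omega>. Fpert (P0 n) (pout n) n K L \<omega> \<partial>(law (Pt0 n) (Pto n) (P0 n) (\<mu> n) (pout n) n K)"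
  have bound: "\<bar>?a n - ?b n L\<bar> \<le> C * s n" if n: "n \<ge> 1" and L: "L \<in> DnK (s n) K" for n L
  proof -
    have mi: "model n K S (Pt0 n) (Pto n) (P0 n) (\<mu> n) (pout n)"
      unfolding model_def using n K S Pt0[OF n] Pto[OF n] P0_kernel[OF n] P0_bounded[OF n] \<mu>[OF n]
        pout_meas[OF n] pout_nonneg[OF n] pout_normalized[OF n] by auto
    show ?thesis using model.main_n[OF mi L s_pos F0_finite[OF n]] unfolding C_def by simp
  qed
  show ?thesis
  proof (intro conjI allI impI)
    show "\<exists>C. \<forall>n\<ge>1. \<forall>L\<in>DnK (s n) K. \<bar>?a n - ?b n L\<bar> \<le> C * s n"
      using bound by blast
    fix Ls :: "nat \<Rightarrow> nat \<times> nat \<Rightarrow> real" and l :: real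
    assume Ls: "\<forall>n. Ls n \<in> DnK (s n) K"
    have d: "(\<lambda>n. ?a n - ?b n (Ls n)) \<longlonglongrightarrow> 0"
    proof (rule Lim_null_comparison)
      show "\<forall>\<^sub>F n in sequentially. norm (?a n - ?b n (Ls n)) \<le> C * s n"
        using eventually_ge_at_top[of 1] by eventually_elim (use bound Ls in auto)
      show "(\<lambda>n. C * s n) \<longlonglongrightarrow> 0" using tendsto_mult_right_zero[OF s_lim] by simp
    qed
    show "(?a \<longlonglongrightarrow> l) = ((\<lambda>n. ?b n (Ls n)) \<longlonglongrightarrow> l)"
    proof
      assume "?a \<longlonglongrightarrow> l"
      from tendsto_diff[OF this d] show "(\<lambda>n. ?b n (Ls n)) \<longlonglongrightarrow> l" by simp
    next
      assume "(\<lambda>n. ?b n (Ls n)) \<longlonglongrightarrow> l"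
      from tendsto_add[OF this d] show "?a \<longlonglongrightarrow> l" by simp
    qed
  qed
qed

end
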